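(* Let $X$ be a compactly generated locally compact Hausdorff group with compact generating set $Y$ and word length function $\ell$. Let $\mathcal H$ be a Hilbert space, let $U:X\to\mathcal U(\mathcal H)$ be a unitary representation of $X$, and let $\{x_j\}_{j\in J}$ be a net in $X$ with $x_j\to\infty$. Assume there exists a self-adjoint operator $A$ in $\mathcal H$ such that $U(y)\in C^1(A)$ for each $y\in Y$, and suppose that the strong limit $$D:=\operatorname{s-lim}_j\frac{1}{\ell(x_j)}[A,U(x_j)]U(x_j)^{-1}$$ exists. Then: (a) $\lim_j\langle\varphi,U(x_j)\psi\rangle=0$ for all $\varphi\in\ker(D)^\perp$ and $\psi\in\mathcal H$; (b) $U$ has no nontrivial finite-dimensional unitary subrepresentation in $\ker(D)^\perp$, i.e. there is no nonzero finite-dimensional subspace of $\ker(D)^\perp$ invariant under all $U(x)$, $x\in X$.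
   Context: $\mathcal U(\mathcal H)$ is the group of unitary operators on $\mathcal H$; the scalar product is antilinear in the first argument. The word length function is $\ell(x):=\min\{n\ge0: x\in(Y\cup Y^{-1})^n\}$ (with $(Y\cup Y^{-1})^0=\{e\}$). A net $\{x_j\}$ in $X$ diverges to infinity ($x_j\to\infty$) if it has no limit (cluster) point in $X$. For a self-adjoint operator $A$ and bounded $S$, $S\in C^1(A)$ means $t\mapsto e^{-itA}Se^{itA}$ is strongly $C^1$; equivalently the form $\mathrm{dom}(A)\ni\varphi\mapsto\langle A\varphi,S\varphi\rangle-\langle\varphi,SA\varphi\rangle$ is continuous for the topology of $\mathcal H$, and $[A,S]$ denotes the bounded operator associated with its continuous extension. *)

theory Defs
  imports "HOL-Analysis.Analysis"
begin

text \<open>The distribution has no complex inner product spaces, so we introduce a type class: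
a real normed vector space with a compatible complex scalar multiplication and a
complex scalar product, antilinear in the first argument, whose norm is induced by
the scalar product.\<close>

class complex_inner_space = real_normed_vector +
  fixes scaleC :: "complex \<Rightarrow> 'a \<Rightarrow> 'a"
    and cinner :: "'a \<Rightarrow> 'a \<Rightarrow> complex"
  assumes scaleC_of_real: "scaleC (of_real r) x = scaleR r x"
    and scaleC_add_right: "scaleC c (x + y) = scaleC c x + scaleC c y"
    and scaleC_add_left: "scaleC (c + d) x = scaleC c x + scaleC d x"
    and scaleC_scaleC: "scaleC c (scaleC d x) = scaleC (c * d) x"
    and scaleC_one: "scaleC 1 x = x"
    and cinner_add_right: "cinner x (y + z) = cinner x y + cinner x z"
    and cinner_scaleC_right: "cinner x (scaleC c y) = c * cinner x y"
    and cinner_commute: "cinner y x = cnj (cinner x y)"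
    and cinner_self_norm: "cinner x x = complex_of_real ((norm x)\<^sup>2)"

class chilbert_space = complex_inner_space + complete_space

definition bounded_clinear :: "('a::complex_inner_space \<Rightarrow> 'b::complex_inner_space) \<Rightarrow> bool" where
  "bounded_clinear f \<longleftrightarrow> bounded_linear f \<and> (\<forall>c x. f (scaleC c x) = scaleC c (f x))"

definition unitary_op :: "('h::chilbert_space \<Rightarrow> 'h) \<Rightarrow> bool" where
  "unitary_op V \<longleftrightarrow> bounded_clinear V \<and> surj V \<and> (\<forall>x y. cinner (V x) (V y) = cinner x y)"

definition csubspace :: "'h::complex_inner_space set \<Rightarrow> bool" where
  "csubspace S \<longleftrightarrow> 0 \<in> S \<and> (\<forall>x\<in>S. \<forall>y\<in>S. x + y \<in> S) \<and> (\<forall>c. \<forall>x\<in>S. scaleC c x \<in> S)"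

definition cspan :: "'h::complex_inner_space set \<Rightarrow> 'h set" where
  "cspan B = {x. \<exists>F c. finite F \<and> F \<subseteq> B \<and> x = (\<Sum>b\<in>F. scaleC (c b) b)}"

definition finite_dim_csubspace :: "'h::complex_inner_space set \<Rightarrow> bool" where
  "finite_dim_csubspace V \<longleftrightarrow> csubspace V \<and> (\<exists>B. finite B \<and> V = cspan B)"

definition orth_compl :: "'h::complex_inner_space set \<Rightarrow> 'h set" where
  "orth_compl S = {\<phi>. \<forall>\<psi>\<in>S. cinner \<psi> \<phi> = 0}"

text \<open>A (possibly unbounded) self-adjoint operator, given by its domain and its action
on the domain: densely defined, linear, and equal to its adjoint.\<close>

definition self_adjoint :: "'h::chilbert_space set \<Rightarrow> ('h \<Rightarrow> 'h) \<Rightarrow> bool" where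
  "self_adjoint domA A \<longleftrightarrow>
     csubspace domA \<and> closure domA = UNIV \<and>
     (\<forall>x\<in>domA. \<forall>y\<in>domA. A (x + y) = A x + A y) \<and>
     (\<forall>c. \<forall>x\<in>domA. A (scaleC c x) = scaleC c (A x)) \<and>
     (\<forall>\<phi>\<in>domA. \<forall>\<psi>\<in>domA. cinner (A \<phi>) \<psi> = cinner \<phi> (A \<psi>)) \<and>
     (\<forall>\<psi> \<eta>. (\<forall>\<phi>\<in>domA. cinner (A \<phi>) \<psi> = cinner \<phi> \<eta>) \<longrightarrow> \<psi> \<in> domA \<and> A \<psi> = \<eta>)"

definition C1 :: "'h::chilbert_space set \<Rightarrow> ('h \<Rightarrow> 'h) \<Rightarrow> ('h \<Rightarrow> 'h) \<Rightarrow> bool" where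
  "C1 domA A S \<longleftrightarrow> bounded_clinear S \<and>
     continuous_on domA (\<lambda>\<phi>. cinner (A \<phi>) (S \<phi>) - cinner \<phi> (S (A \<phi>)))"

text \<open>[A,S]: the bounded operator associated with the continuous extension of that form.\<close>

definition commutator :: "'h::chilbert_space set \<Rightarrow> ('h \<Rightarrow> 'h) \<Rightarrow> ('h \<Rightarrow> 'h) \<Rightarrow> ('h \<Rightarrow> 'h)" where
  "commutator domA A S = (THE T. bounded_clinear T \<and>
     (\<forall>\<phi>\<in>domA. cinner \<phi> (T \<phi>) = cinner (A \<phi>) (S \<phi>) - cinner \<phi> (S (A \<phi>))))"

section \<open>Groups (written additively: + is the group law, 0 the identity, - the inverse;
  the law is not assumed commutative)\<close>

fun gen_pow :: "'g::group_add set \<Rightarrow> nat \<Rightarrow> 'g set" where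
  "gen_pow S 0 = {0}"
| "gen_pow S (Suc n) = {a + b | a b. a \<in> S \<and> b \<in> gen_pow S n}"

definition word_length :: "'g::group_add set \<Rightarrow> 'g \<Rightarrow> nat" where
  "word_length Y x = (LEAST n. x \<in> gen_pow (Y \<union> uminus ` Y) n)"

definition compact_generating_set :: "'g::topological_group_add set \<Rightarrow> bool" where
  "compact_generating_set Y \<longleftrightarrow> compact Y \<and> (\<forall>x. \<exists>n. x \<in> gen_pow (Y \<union> uminus ` Y) n)"

definition unitary_rep :: "('g::topological_group_add \<Rightarrow> 'h::chilbert_space \<Rightarrow> 'h) \<Rightarrow> bool" where
  "unitary_rep U \<longleftrightarrow> (\<forall>x. unitary_op (U x)) \<and> U 0 = id \<and>
     (\<forall>x y. U (x + y) = U x \<circ> U y) \<and> (\<forall>\<psi>. continuous_on UNIV (\<lambda>x. U x \<psi>))"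

definition directed_set :: "'j set \<Rightarrow> ('j \<Rightarrow> 'j \<Rightarrow> bool) \<Rightarrow> bool" where
  "directed_set J le \<longleftrightarrow> J \<noteq> {} \<and> (\<forall>j\<in>J. le j j) \<and>
     (\<forall>i\<in>J. \<forall>j\<in>J. \<forall>k\<in>J. le i j \<and> le j k \<longrightarrow> le i k) \<and>
     (\<forall>i\<in>J. \<forall>j\<in>J. \<exists>k\<in>J. le i k \<and> le j k)"

text \<open>The filter of tails of a net indexed by a directed set; convergence of the net
  is convergence along this filter.\<close>

definition net_filter :: "'j set \<Rightarrow> ('j \<Rightarrow> 'j \<Rightarrow> bool) \<Rightarrow> 'j filter" where
  "net_filter J le = (INF j\<in>J. principal {k\<in>J. le j k})"

definition net_diverges :: "'j set \<Rightarrow> ('j \<Rightarrow> 'j \<Rightarrow> bool) \<Rightarrow> ('j \<Rightarrow> 'g::topological_space) \<Rightarrow> bool" where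
  "net_diverges J le x \<longleftrightarrow>
     \<not> (\<exists>p. \<forall>V. open V \<and> p \<in> V \<longrightarrow> (\<forall>j\<in>J. \<exists>k\<in>J. le j k \<and> x k \<in> V))"

end

theory Submission
  imports Defs
begin

lemma cinner_add_left: "cinner (x + y) z = cinner x z + cinner y z"
proof -
  have "cinner (x+y) z = cnj (cinner z (x+y))" by (rule cinner_commute)
  also have "\<dots> = cnj (cinner z x) + cnj (cinner z y)" by (simp add: cinner_add_right)
  also have "\<dots> = cinner x z + cinner y z" by (simp add: cinner_commute[of x z] cinner_commute[of y z])
  finally show ?thesis .
qed

lemma cinner_scaleC_left: "cinner (scaleC c x) y = cnj c * cinner x y"
proof -
  have "cinner (scaleC c x) y = cnj (cinner y (scaleC c x))" by (rule cinner_commute)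
  also have "\<dots> = cnj c * cnj (cinner y x)" by (simp add: cinner_scaleC_right)
  also have "\<dots> = cnj c * cinner x y" by (simp add: cinner_commute[of x y])
  finally show ?thesis .
qed

lemma cinner_zero_right [simp]: "cinner x 0 = 0"
  using cinner_add_right[of x 0 0] by simp

lemma cinner_zero_left [simp]: "cinner 0 x = 0"
  using cinner_add_left[of 0 0 x] by simp

lemma scaleR_scaleC: "scaleR r x = scaleC (complex_of_real r) x"
  by (simp add: scaleC_of_real)

lemma scaleC_zero_left [simp]: "scaleC 0 x = 0"
  using scaleC_of_real[of 0 x] by simp

lemma scaleC_zero_right [simp]: "scaleC c 0 = 0"
  using scaleC_add_right[of c 0 0] by simp

lemma scaleC_minus1: "scaleC (-1) x = - x"
  using scaleC_of_real[of "-1" x] by simp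

lemma scaleC_minus_left: "scaleC (- c) x = - scaleC c x"
proof -
  have "scaleC (- c) x = scaleC (-1) (scaleC c x)" by (simp add: scaleC_scaleC)
  then show ?thesis by (simp add: scaleC_minus1)
qed

lemma scaleC_minus_right: "scaleC c (- x) = - scaleC c x"
proof -
  have "scaleC c (- x) = scaleC c (scaleC (-1) x)" by (simp add: scaleC_minus1)
  also have "\<dots> = scaleC (-1) (scaleC c x)" by (simp add: scaleC_scaleC mult.commute)
  finally show ?thesis by (simp add: scaleC_minus1)
qed

lemma scaleC_diff_right: "scaleC c (x - y) = scaleC c x - scaleC c y"
  by (metis diff_conv_add_uminus scaleC_add_right scaleC_minus_right)

lemma scaleC_diff_left: "scaleC (c - d) x = scaleC c x - scaleC d x"
  by (metis diff_conv_add_uminus scaleC_add_left scaleC_minus_left)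

lemma cinner_minus_right: "cinner x (- y) = - cinner x y"
  using cinner_scaleC_right[of x "-1" y] by (simp add: scaleC_minus1)

lemma cinner_minus_left: "cinner (- x) y = - cinner x y"
  using cinner_scaleC_left[of "-1" x y] by (simp add: scaleC_minus1)

lemma cinner_diff_right: "cinner x (y - z) = cinner x y - cinner x z"
  using cinner_add_right[of x y "- z"] by (simp add: cinner_minus_right)

lemma cinner_diff_left: "cinner (x - y) z = cinner x z - cinner y z"
  using cinner_add_left[of x "- y" z] by (simp add: cinner_minus_left)

lemma cinner_scaleR_left: "cinner (scaleR r x) y = complex_of_real r * cinner x y"
  by (simp add: scaleR_scaleC cinner_scaleC_left)

lemma cinner_scaleR_right: "cinner x (scaleR r y) = complex_of_real r * cinner x y"
  by (simp add: scaleR_scaleC cinner_scaleC_right)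

lemma Re_cinner_self: "Re (cinner x x) = (norm x)\<^sup>2"
  by (simp add: cinner_self_norm)

lemma Im_cinner_self: "Im (cinner x x) = 0"
  by (simp add: cinner_self_norm)

lemma cinner_self_eq_0: "cinner x x = 0 \<longleftrightarrow> x = 0"
  by (simp add: cinner_self_norm)

lemma norm_scaleC: "norm (scaleC c x) = cmod c * norm x"
proof -
  have "complex_of_real ((norm (scaleC c x))\<^sup>2) = cinner (scaleC c x) (scaleC c x)"
    by (simp add: cinner_self_norm)
  also have "\<dots> = cnj c * c * cinner x x"
    by (simp add: cinner_scaleC_left cinner_scaleC_right)
  also have "\<dots> = complex_of_real ((cmod c)\<^sup>2) * complex_of_real ((norm x)\<^sup>2)"
  proof -
    have "cnj c * c = complex_of_real ((cmod c)\<^sup>2)"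
      using complex_norm_square[of c] by (simp only: mult.commute)
    then show ?thesis by (simp only: cinner_self_norm)
  qed
  also have "\<dots> = complex_of_real ((cmod c * norm x)\<^sup>2)"
    by (simp only: of_real_mult[symmetric] power_mult_distrib)
  finally have "(norm (scaleC c x))\<^sup>2 = (cmod c * norm x)\<^sup>2"
    by (rule of_real_eq_iff[THEN iffD1])
  then show ?thesis
    by (rule power2_eq_imp_eq) simp_all
qed

lemma cauchy_schwarz: "cmod (cinner x y) \<le> norm x * norm y"
proof (cases "y = 0")
  case True then show ?thesis by simp
next
  case False
  define n where "n = (norm y)\<^sup>2"
  have n: "n > 0" using False by (simp add: n_def)
  define a where "a = cinner y x"
  define t where "t = a / complex_of_real n"
  have "0 \<le> Re (cinner (x - scaleC t y) (x - scaleC t y))"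
    by (simp add: Re_cinner_self)
  also have "cinner (x - scaleC t y) (x - scaleC t y) =
      cinner x x - t * cinner x y - cnj t * cinner y x + cnj t * t * cinner y y"
    by (simp add: cinner_diff_left cinner_diff_right cinner_scaleC_left cinner_scaleC_right
        algebra_simps)
  also have "\<dots> = cinner x x - complex_of_real ((cmod a)\<^sup>2 / n)"
  proof -
    have cxy: "cinner x y = cnj a" by (simp add: a_def cinner_commute[of x y])
    have cyy: "cinner y y = complex_of_real n" by (simp add: n_def cinner_self_norm)
    have aa: "cnj a * a = complex_of_real ((cmod a)\<^sup>2)"
      by (metis complex_norm_square mult.commute)
    have "t * cnj a = complex_of_real ((cmod a)\<^sup>2 / n)"
      using aa n by (simp add: t_def mult.commute)
    moreover have "cnj t * a = complex_of_real ((cmod a)\<^sup>2 / n)"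
      using aa n by (simp add: t_def)
    moreover have "cnj t * t * complex_of_real n = complex_of_real ((cmod a)\<^sup>2 / n)"
      using aa n by (simp add: t_def field_simps power2_eq_square)
    ultimately show ?thesis unfolding cxy cyy a_def[symmetric] by simp
  qed
  finally have "(cmod a)\<^sup>2 / n \<le> (norm x)\<^sup>2" by (simp add: Re_cinner_self)
  then have "(cmod a)\<^sup>2 \<le> (norm x)\<^sup>2 * (norm y)\<^sup>2"
    using n by (simp add: n_def field_simps)
  then have "(cmod a)\<^sup>2 \<le> (norm x * norm y)\<^sup>2" by (simp add: power_mult_distrib)
  then have "cmod a \<le> norm x * norm y"
    by (rule power2_le_imp_le) simp
  moreover have "cmod (cinner x y) = cmod a"
    by (simp add: a_def cinner_commute[of x y])
  ultimately show ?thesis by simp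
qed

lemma norm_add_sq: "(norm (x + y))\<^sup>2 = (norm x)\<^sup>2 + 2 * Re (cinner x y) + (norm y)\<^sup>2"
proof -
  have "(norm (x + y))\<^sup>2 = Re (cinner (x+y) (x+y))" by (simp add: Re_cinner_self)
  also have "\<dots> = Re (cinner x x + cinner x y + cinner y x + cinner y y)"
    by (simp add: cinner_add_left cinner_add_right)
  also have "\<dots> = (norm x)\<^sup>2 + 2 * Re (cinner x y) + (norm y)\<^sup>2"
    by (simp add: Re_cinner_self cinner_commute[of y x])
  finally show ?thesis .
qed

lemma norm_diff_sq: "(norm (x - y))\<^sup>2 = (norm x)\<^sup>2 - 2 * Re (cinner x y) + (norm y)\<^sup>2"
  using norm_add_sq[of x "- y"] by (simp add: cinner_minus_right)


lemma bounded_bilinear_cinner: "bounded_bilinear (cinner :: 'a::complex_inner_space \<Rightarrow> _)"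
proof (rule bounded_bilinear.intro)
  show "\<And>a a' b. cinner (a + a') b = cinner a b + cinner a' b" by (rule cinner_add_left)
  show "\<And>a b b'. cinner a (b + b') = cinner a b + cinner a b'" by (rule cinner_add_right)
  show "\<And>r a b. cinner (scaleR r a) b = scaleR r (cinner a b)"
    by (simp add: cinner_scaleR_left scaleR_conv_of_real)
  show "\<And>r a b. cinner a (scaleR r b) = scaleR r (cinner a b)"
    by (simp add: cinner_scaleR_right scaleR_conv_of_real)
  show "\<exists>K. \<forall>a b. norm (cinner a b) \<le> norm a * norm b * K"
    by (rule exI[of _ 1]) (simp add: cauchy_schwarz)
qed

lemma tendsto_cinner [tendsto_intros]:
  "(f \<longlongrightarrow> a) F \<Longrightarrow> (g \<longlongrightarrow> b) F \<Longrightarrow> ((\<lambda>t. cinner (f t) (g t)) \<longlongrightarrow> cinner a b) F"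
  by (rule bounded_bilinear.tendsto[OF bounded_bilinear_cinner])

lemma continuous_on_cinner [continuous_intros]:
  "continuous_on S f \<Longrightarrow> continuous_on S g \<Longrightarrow> continuous_on S (\<lambda>t. cinner (f t) (g t))"
  by (rule bounded_bilinear.continuous_on[OF bounded_bilinear_cinner])

section \<open>Bounded operators and unitaries\<close>

lemma bclin_bl: "bounded_clinear f \<Longrightarrow> bounded_linear f"
  by (simp add: bounded_clinear_def)

lemma bclin_scaleC: "bounded_clinear f \<Longrightarrow> f (scaleC c x) = scaleC c (f x)"
  by (simp add: bounded_clinear_def)

lemma bclin_add: "bounded_clinear f \<Longrightarrow> f (x + y) = f x + f y"
  by (simp add: bounded_clinear_def linear_simps)

lemma bclin_diff: "bounded_clinear f \<Longrightarrow> f (x - y) = f x - f y"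
  by (simp add: bounded_clinear_def linear_simps)

lemma bclin_zero: "bounded_clinear f \<Longrightarrow> f 0 = 0"
  by (simp add: bounded_clinear_def linear_simps)

lemma bclin_cont: "bounded_clinear f \<Longrightarrow> continuous_on S f"
  by (simp add: bounded_clinear_def linear_continuous_on)

lemma bclin_bound: "bounded_clinear f \<Longrightarrow> \<exists>K>0. \<forall>x. norm (f x) \<le> norm x * K"
  using bounded_linear.pos_bounded bclin_bl by blast

lemma bclin_tendsto: "bounded_clinear f \<Longrightarrow> (g \<longlongrightarrow> a) F \<Longrightarrow> ((\<lambda>t. f (g t)) \<longlongrightarrow> f a) F"
  using bounded_linear.tendsto bclin_bl by blast

lemma bounded_linear_scaleC: "bounded_linear (scaleC c :: 'a::complex_inner_space \<Rightarrow> 'a)"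
proof
  show "scaleC c (x + y) = scaleC c x + scaleC c y" for x y :: 'a by (rule scaleC_add_right)
  show "scaleC c (scaleR r x) = scaleR r (scaleC c x)" for r and x :: 'a
    by (simp add: scaleR_scaleC scaleC_scaleC mult.commute)
  show "\<exists>K. \<forall>x::'a. norm (scaleC c x) \<le> norm x * K"
    by (rule exI[of _ "cmod c"]) (simp add: norm_scaleC mult.commute)
qed

lemma continuous_on_scaleC [continuous_intros]:
  "continuous_on S f \<Longrightarrow> continuous_on S (\<lambda>t. scaleC c (f t :: 'a::complex_inner_space))"
  using bounded_linear.continuous_on[OF bounded_linear_scaleC] by blast

lemma tendsto_scaleC [tendsto_intros]:
  "(f \<longlongrightarrow> a) F \<Longrightarrow> ((\<lambda>t. scaleC c (f t :: 'a::complex_inner_space)) \<longlongrightarrow> scaleC c a) F"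
  using bounded_linear.tendsto[OF bounded_linear_scaleC] by blast

lemma unitary_norm: "unitary_op V \<Longrightarrow> norm (V x) = norm x"
proof -
  assume u: "unitary_op V"
  have "cinner (V x) (V x) = cinner x x" using u by (simp add: unitary_op_def)
  then have "complex_of_real ((norm (V x))\<^sup>2) = complex_of_real ((norm x)\<^sup>2)"
    by (simp only: cinner_self_norm)
  then have "(norm (V x))\<^sup>2 = (norm x)\<^sup>2" by (rule of_real_eq_iff[THEN iffD1])
  then show ?thesis by (rule power2_eq_imp_eq) simp_all
qed

lemma rep_inv1: "unitary_rep U \<Longrightarrow> U (- g) (U g v) = v"
proof -
  assume u: "unitary_rep U"
  have "U (- g + g) = U (- g) \<circ> U g" using u unfolding unitary_rep_def by blast
  then have "U (- g) (U g v) = U (- g + g) v" by simp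
  also have "\<dots> = v" using u by (simp add: unitary_rep_def)
  finally show ?thesis .
qed

lemma rep_inv2: "unitary_rep U \<Longrightarrow> U g (U (- g) v) = v"
  using rep_inv1[of U "- g" v] by simp

lemma rep_unitary: "unitary_rep U \<Longrightarrow> unitary_op (U g)"
  by (simp add: unitary_rep_def)

lemma rep_bclin: "unitary_rep U \<Longrightarrow> bounded_clinear (U g)"
  by (simp add: unitary_rep_def unitary_op_def)

lemma rep_norm: "unitary_rep U \<Longrightarrow> norm (U g v) = norm v"
  by (simp add: rep_unitary unitary_norm)

lemma rep_cinner: "unitary_rep U \<Longrightarrow> cinner (U g a) (U g b) = cinner a b"
  by (simp add: unitary_rep_def unitary_op_def)

lemma rep_adj: "unitary_rep U \<Longrightarrow> cinner (U g a) b = cinner a (U (- g) b)"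
  by (metis rep_cinner rep_inv2)

lemma rep_adj2: "unitary_rep U \<Longrightarrow> cinner a (U g b) = cinner (U (- g) a) b"
  using rep_adj[of U "- g" a b] by simp

lemma rep_add: "unitary_rep U \<Longrightarrow> U (g + h) v = U g (U h v)"
  by (simp add: unitary_rep_def)

lemma dense_eq:
  fixes f g :: "'a::topological_space \<Rightarrow> 'b::t2_space"
  assumes "continuous_on UNIV f" "continuous_on UNIV g" "closure S = UNIV" "\<And>x. x \<in> S \<Longrightarrow> f x = g x"
  shows "f x = g x"
proof -
  have "closed {x. f x = g x}" by (rule closed_Collect_eq[OF assms(1,2)])
  moreover have "S \<subseteq> {x. f x = g x}" using assms(4) by blast
  ultimately have "closure S \<subseteq> {x. f x = g x}" by (rule closure_minimal[rotated])
  then show ?thesis using assms(3) by blast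
qed

lemma dense_le:
  fixes f g :: "'a::topological_space \<Rightarrow> real"
  assumes "continuous_on UNIV f" "continuous_on UNIV g" "closure S = UNIV" "\<And>x. x \<in> S \<Longrightarrow> f x \<le> g x"
  shows "f x \<le> g x"
proof -
  have "closed {x. f x \<le> g x}" by (rule closed_Collect_le[OF assms(1,2)])
  moreover have "S \<subseteq> {x. f x \<le> g x}" using assms(4) by blast
  ultimately have "closure S \<subseteq> {x. f x \<le> g x}" by (rule closure_minimal[rotated])
  then show ?thesis using assms(3) by blast
qed

lemma dense_orth:
  fixes w :: "'a::complex_inner_space"
  assumes "closure S = UNIV" "\<And>x. x \<in> S \<Longrightarrow> cinner x w = 0"
  shows "w = 0"
proof -
  have "cinner w w = 0"
    by (rule dense_eq[of "\<lambda>x. cinner x w" "\<lambda>x. 0" S]) (auto intro!: continuous_intros simp: assms)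
  then show ?thesis by (simp add: cinner_self_eq_0)
qed

lemma dense_bound:
  fixes w :: "'a::complex_inner_space"
  assumes "closure S = UNIV" "\<And>x. x \<in> S \<Longrightarrow> cmod (cinner x w) \<le> M * norm x" "0 \<le> M"
  shows "norm w \<le> M"
proof -
  have *: "cmod (cinner w w) \<le> M * norm w"
    by (rule dense_le[of "\<lambda>x. cmod (cinner x w)" "\<lambda>x. M * norm x" S])
       (auto intro!: continuous_intros simp: assms)
  have "cmod (cinner w w) = (norm w)\<^sup>2" unfolding cinner_self_norm norm_of_real by simp
  with * have "norm w * norm w \<le> M * norm w" by (simp add: power2_eq_square)
  then show ?thesis
    using assms(3) by (cases "norm w = 0") (auto simp: mult_le_cancel_right)
qed

lemma lip_cont:
  assumes "\<And>x y. dist (f x) (f y) \<le> L * dist x y" "0 \<le> L"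
  shows "continuous_on S f"
  by (rule lipschitz_on_continuous_on[OF lipschitz_onI]) (use assms in auto)

lemma csub_minus: "csubspace S \<Longrightarrow> x \<in> S \<Longrightarrow> - x \<in> S"
  unfolding csubspace_def by (metis scaleC_minus1)

lemma csub_add: "csubspace S \<Longrightarrow> x \<in> S \<Longrightarrow> y \<in> S \<Longrightarrow> x + y \<in> S"
  unfolding csubspace_def by blast

lemma csub_diff: "csubspace S \<Longrightarrow> x \<in> S \<Longrightarrow> y \<in> S \<Longrightarrow> x - y \<in> S"
  by (metis csub_add csub_minus diff_conv_add_uminus)

lemma csub_scaleC: "csubspace S \<Longrightarrow> x \<in> S \<Longrightarrow> scaleC c x \<in> S"
  unfolding csubspace_def by blast

lemma csub_scaleR: "csubspace S \<Longrightarrow> x \<in> S \<Longrightarrow> scaleR r x \<in> S"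
  unfolding csubspace_def by (metis scaleR_scaleC)

lemma csub_zero: "csubspace S \<Longrightarrow> 0 \<in> S"
  unfolding csubspace_def by blast

lemma dense_ext:
  fixes f :: "'a::complex_inner_space \<Rightarrow> 'b::{real_normed_vector,complete_space}"
  assumes S: "csubspace S" "closure S = UNIV"
    and add: "\<And>x y. x \<in> S \<Longrightarrow> y \<in> S \<Longrightarrow> f (x + y) = f x + f y"
    and bnd: "\<And>x. x \<in> S \<Longrightarrow> norm (f x) \<le> K * norm x" and K: "0 \<le> K"
  obtains g where "continuous_on UNIV g" "\<And>x y. g (x + y) = g x + g y"
    "\<And>x. norm (g x) \<le> K * norm x" "\<And>x. x \<in> S \<Longrightarrow> g x = f x"
proof -
  have fdiff: "f (x - y) = f x - f y" if "x \<in> S" "y \<in> S" for x y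
  proof -
    have "f x = f ((x - y) + y)" by simp
    also have "\<dots> = f (x - y) + f y" by (rule add) (use that S in \<open>auto intro: csub_diff\<close>)
    finally show ?thesis by simp
  qed
  have "uniformly_continuous_on S f"
    unfolding uniformly_continuous_on_def
  proof (intro allI impI)
    fix e :: real assume e: "0 < e"
    show "\<exists>d>0. \<forall>x\<in>S. \<forall>x'\<in>S. dist x' x < d \<longrightarrow> dist (f x') (f x) < e"
    proof (intro exI[of _ "e / (K + 1)"] conjI ballI impI)
      show "0 < e / (K + 1)" using e K by simp
      fix x x' assume xs: "x \<in> S" "x' \<in> S" and d: "dist x' x < e / (K + 1)"
      have "dist (f x') (f x) = norm (f (x' - x))" using xs by (simp add: dist_norm fdiff)
      also have "\<dots> \<le> K * norm (x' - x)" using xs S by (auto intro!: bnd csub_diff)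
      also have "\<dots> \<le> K * (e / (K + 1))" using d K by (intro mult_left_mono) (auto simp: dist_norm)
      also have "\<dots> < e" using e K by (simp add: field_simps)
      finally show "dist (f x') (f x) < e" .
    qed
  qed
  then obtain g where g: "uniformly_continuous_on (closure S) g" "\<And>x. x \<in> S \<Longrightarrow> f x = g x"
    by (rule uniformly_continuous_on_extension_on_closure) blast
  have cg: "continuous_on UNIV g"
    using g(1) S(2) uniformly_continuous_imp_continuous by fastforce
  have add1: "g (x + y) = g x + g y" if "y \<in> S" for x y
  proof (rule dense_eq[of "\<lambda>x. g (x + y)" "\<lambda>x. g x + g y" S])
    show "continuous_on UNIV (\<lambda>x. g (x + y))"
      by (rule continuous_on_compose2[OF cg]) (auto intro!: continuous_intros)
    show "continuous_on UNIV (\<lambda>x. g x + g y)" by (auto intro!: continuous_intros cg)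
    show "closure S = UNIV" by (rule S(2))
    show "g (x + y) = g x + g y" if "x \<in> S" for x
      using that \<open>y \<in> S\<close> S by (metis g(2) add csub_add)
  qed
  have add2: "g (x + y) = g x + g y" for x y
  proof (rule dense_eq[of "\<lambda>y. g (x + y)" "\<lambda>y. g x + g y" S])
    show "continuous_on UNIV (\<lambda>y. g (x + y))"
      by (rule continuous_on_compose2[OF cg]) (auto intro!: continuous_intros)
    show "continuous_on UNIV (\<lambda>y. g x + g y)" by (auto intro!: continuous_intros cg)
    show "closure S = UNIV" by (rule S(2))
    show "g (x + y) = g x + g y" if "y \<in> S" for y using add1 that .
  qed
  have bnd2: "norm (g x) \<le> K * norm x" for x
  proof (rule dense_le[of "\<lambda>x. norm (g x)" "\<lambda>x. K * norm x" S])
    show "continuous_on UNIV (\<lambda>x. norm (g x))" by (auto intro!: continuous_intros cg)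
    show "continuous_on UNIV (\<lambda>x. K * norm x)" by (auto intro!: continuous_intros)
    show "closure S = UNIV" by (rule S(2))
    show "norm (g x) \<le> K * norm x" if "x \<in> S" for x using that bnd g(2) by metis
  qed
  show ?thesis using that cg add2 bnd2 g(2) by metis
qed

lemma parallelogram:
  "(norm (a + b))\<^sup>2 + (norm (a - b))\<^sup>2 = 2 * (norm a)\<^sup>2 + 2 * (norm (b :: 'a::complex_inner_space))\<^sup>2"
  by (simp add: norm_add_sq norm_diff_sq)

lemma projection:
  fixes x :: "'h::chilbert_space"
  assumes M: "csubspace M" "closed M"
  obtains m where "m \<in> M" "\<And>y. y \<in> M \<Longrightarrow> cinner y (x - m) = 0"
proof -
  define N where "N = (\<lambda>m. norm (x - m)) ` M"
  define d where "d = Inf N"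
  have Nne: "N \<noteq> {}" using csub_zero[OF M(1)] by (auto simp: N_def)
  have Nbdd: "bdd_below N" by (auto simp: N_def intro!: bdd_belowI[of _ 0])
  have dle: "d \<le> norm (x - y)" if "y \<in> M" for y
    unfolding d_def using that Nbdd by (auto simp: N_def intro!: cInf_lower)
  have d0: "0 \<le> d" unfolding d_def by (rule cInf_greatest[OF Nne]) (auto simp: N_def)
  have "\<exists>m\<in>M. norm (x - m) < d + inverse (real (Suc n))" for n
  proof -
    have "Inf N < d + inverse (real (Suc n))" by (simp add: d_def)
    then obtain v where "v \<in> N" "v < d + inverse (real (Suc n))" using cInf_lessD[OF Nne] by blast
    then show ?thesis by (auto simp: N_def)
  qed
  then obtain ms where ms: "\<And>n. ms n \<in> M" "\<And>n. norm (x - ms n) < d + inverse (real (Suc n))"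
    by metis
  have "Cauchy ms"
  proof (rule CauchyI)
    fix e :: real assume e: "0 < e"
    obtain N0 :: nat where N0: "(8 * d + 4) / e\<^sup>2 < real N0" using reals_Archimedean2 by blast
    define t where "t = inverse (real (Suc N0))"
    have t: "0 < t" "t \<le> 1" by (auto simp: t_def inverse_le_1_iff)
    have tN: "(8 * d + 4) * t < e\<^sup>2"
    proof -
      have "(8 * d + 4) / e\<^sup>2 < real (Suc N0)" using N0 by simp
      then have "(8 * d + 4) < e\<^sup>2 * real (Suc N0)" using e by (simp add: field_simps)
      then show ?thesis by (simp add: t_def field_simps)
    qed
    show "\<exists>K. \<forall>m\<ge>K. \<forall>n\<ge>K. norm (ms m - ms n) < e"
    proof (intro exI[of _ N0] allI impI)
      fix m n assume mn: "N0 \<le> m" "N0 \<le> n"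
      define a where "a = x - ms m"
      define b where "b = x - ms n"
      have tm: "inverse (real (Suc m)) \<le> t" using mn by (simp add: t_def le_imp_inverse_le)
      have tn: "inverse (real (Suc n)) \<le> t" using mn by (simp add: t_def le_imp_inverse_le)
      have na: "norm a \<le> d + t" using ms(2)[of m] tm by (simp add: a_def)
      have nb: "norm b \<le> d + t" using ms(2)[of n] tn by (simp add: b_def)
      define mid where "mid = scaleR (1/2) (ms m + ms n)"
      have midM: "mid \<in> M" unfolding mid_def by (intro csub_scaleR csub_add M(1) ms(1))
      have abmid: "a + b = scaleR 2 (x - mid)"
        by (simp add: a_def b_def mid_def algebra_simps scaleR_2)
      have "norm (a + b) = 2 * norm (x - mid)" by (simp add: abmid)
      then have nab: "2 * d \<le> norm (a + b)" using dle[OF midM] by simp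
      have "(norm (a - b))\<^sup>2 = 2 * (norm a)\<^sup>2 + 2 * (norm b)\<^sup>2 - (norm (a + b))\<^sup>2"
        using parallelogram[of a b] by simp
      also have "\<dots> \<le> 2 * (d + t)\<^sup>2 + 2 * (d + t)\<^sup>2 - (2 * d)\<^sup>2"
      proof -
        have "(norm a)\<^sup>2 \<le> (d + t)\<^sup>2" using na by (intro power_mono) auto
        moreover have "(norm b)\<^sup>2 \<le> (d + t)\<^sup>2" using nb by (intro power_mono) auto
        moreover have "(2 * d)\<^sup>2 \<le> (norm (a + b))\<^sup>2" using nab d0 by (intro power_mono) auto
        ultimately show ?thesis by linarith
      qed
      also have "\<dots> = 8 * d * t + 4 * t\<^sup>2" by (simp add: power2_eq_square algebra_simps)
      also have "\<dots> \<le> (8 * d + 4) * t"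
        using t d0 by (simp add: power2_eq_square algebra_simps mult_left_le)
      also have "\<dots> < e\<^sup>2" by (rule tN)
      finally have "(norm (a - b))\<^sup>2 < e\<^sup>2" .
      then have "norm (a - b) < e" using e by (simp add: power_less_imp_less_base)
      moreover have "a - b = ms n - ms m" by (simp add: a_def b_def)
      ultimately show "norm (ms m - ms n) < e" by (simp add: norm_minus_commute)
    qed
  qed
  then obtain m where lim: "ms \<longlonglongrightarrow> m"
    using Cauchy_convergent_iff convergent_def by blast
  have mM: "m \<in> M" using M(2) lim ms(1) closed_sequential_limits by blast
  have mmin: "norm (x - m) \<le> d"
  proof (rule tendsto_le[OF trivial_limit_sequentially])
    show "(\<lambda>n. d + inverse (real (Suc n))) \<longlonglongrightarrow> d"
      using tendsto_add[OF tendsto_const LIMSEQ_inverse_real_of_nat] by simp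
    show "(\<lambda>n. norm (x - ms n)) \<longlonglongrightarrow> norm (x - m)" by (intro tendsto_intros lim)
    show "\<forall>\<^sub>F n in sequentially. norm (x - ms n) \<le> d + inverse (real (Suc n))"
      using ms(2) by (intro always_eventually allI less_imp_le) blast
  qed
  have orth: "cinner y (x - m) = 0" if yM: "y \<in> M" for y
  proof -
    define z where "z = x - m"
    define a where "a = cinner y z"
    define s where "s = 1 / ((norm y)\<^sup>2 + 1)"
    have p: "0 < (norm y)\<^sup>2 + 1" by (simp add: add_nonneg_pos)
    have s: "0 < s" "s * (norm y)\<^sup>2 \<le> 1" using p by (auto simp: s_def field_simps)
    define w where "w = scaleC (complex_of_real s * a) y"
    have "m + w \<in> M" unfolding w_def by (intro csub_add csub_scaleC M(1) mM yM)
    then have "d \<le> norm (x - (m + w))" by (rule dle)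
    then have "norm z \<le> norm (z - w)" using mmin by (simp add: z_def algebra_simps)
    then have "(norm z)\<^sup>2 \<le> (norm (z - w))\<^sup>2" by (intro power_mono) auto
    also have "\<dots> = (norm z)\<^sup>2 - 2 * Re (cinner z w) + (norm w)\<^sup>2" by (rule norm_diff_sq)
    finally have ineq: "2 * Re (cinner z w) \<le> (norm w)\<^sup>2" by simp
    have czy: "cinner z y = cnj a" by (simp add: a_def cinner_commute[of y z])
    have "cinner z w = complex_of_real s * a * cnj a" by (simp add: w_def cinner_scaleC_right czy)
    also have "\<dots> = complex_of_real (s * (cmod a)\<^sup>2)"
      by (simp add: complex_norm_square[symmetric])
    finally have "Re (cinner z w) = s * (cmod a)\<^sup>2" by simp
    moreover have "(norm w)\<^sup>2 = s\<^sup>2 * (cmod a)\<^sup>2 * (norm y)\<^sup>2"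
      using s by (simp add: w_def norm_scaleC norm_mult power_mult_distrib)
    ultimately have "2 * s * (cmod a)\<^sup>2 \<le> s * (s * (norm y)\<^sup>2) * (cmod a)\<^sup>2"
      using ineq by (simp add: power2_eq_square algebra_simps)
    also have "\<dots> \<le> s * 1 * (cmod a)\<^sup>2" using s by (intro mult_right_mono mult_left_mono) auto
    finally have "(cmod a)\<^sup>2 \<le> 0" using s by simp
    then have "a = 0" by simp
    then show ?thesis by (simp add: a_def z_def)
  qed
  show ?thesis using that mM orth by blast
qed

lemma riesz:
  fixes g :: "'h::chilbert_space \<Rightarrow> complex"
  assumes add: "\<And>x y. g (x + y) = g x + g y" and hom: "\<And>c x. g (scaleC c x) = c * g x"
    and bnd: "\<And>x. cmod (g x) \<le> K * norm x"
  obtains \<eta> where "\<And>x. g x = cinner \<eta> x"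
proof -
  have g0: "g 0 = 0" using add[of 0 0] by simp
  have gdiff: "g (x - y) = g x - g y" for x y
    using add[of "x - y" y] by simp
  have cg: "continuous_on UNIV g"
  proof (rule lip_cont[of _ "\<bar>K\<bar>"])
    show "dist (g x) (g y) \<le> \<bar>K\<bar> * dist x y" for x y
    proof -
      have "dist (g x) (g y) = cmod (g (x - y))" by (simp add: dist_norm gdiff)
      also have "\<dots> \<le> K * norm (x - y)" by (rule bnd)
      also have "\<dots> \<le> \<bar>K\<bar> * norm (x - y)" by (intro mult_right_mono) auto
      finally show ?thesis by (simp add: dist_norm)
    qed
  qed simp
  show ?thesis
  proof (cases "\<forall>x. g x = 0")
    case True
    then show ?thesis using that[of 0] by simp
  next
    case False
    then obtain x0 where x0: "g x0 \<noteq> 0" by blast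
    define N where "N = {x. g x = 0}"
    have Nsub: "csubspace N" unfolding N_def csubspace_def by (simp add: g0 add hom)
    have Ncl: "closed N" unfolding N_def by (rule closed_Collect_eq[OF cg continuous_on_const])
    obtain m where m: "m \<in> N" "\<And>y. y \<in> N \<Longrightarrow> cinner y (x0 - m) = 0"
      using projection[OF Nsub Ncl] by blast
    define z where "z = x0 - m"
    have gz: "g z = g x0" using m(1) by (simp add: z_def gdiff N_def)
    have z0: "z \<noteq> 0" using gz x0 g0 by auto
    have zz: "cinner z z \<noteq> 0" using z0 by (simp add: cinner_self_eq_0)
    define \<eta> where "\<eta> = scaleC (cnj (g z / cinner z z)) z"
    show ?thesis
    proof (rule that)
      fix x
      define c where "c = g x / g z"
      have "x - scaleC c z \<in> N" using gz x0 by (simp add: N_def gdiff hom c_def)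
      then have "cinner (x - scaleC c z) z = 0" using m(2) by (simp add: z_def)
      then have "cinner x z = cnj c * cinner z z" by (simp add: cinner_diff_left cinner_scaleC_left)
      then have "cnj (cinner x z) = c * cnj (cinner z z)" by simp
      moreover have "cnj (cinner z z) = cinner z z" by (simp add: cinner_self_norm)
      ultimately have "cinner z x = c * cinner z z" by (simp add: cinner_commute[of x z])
      then have "c = cinner z x / cinner z z" using zz by (simp add: field_simps)
      then have "g x = g z * (cinner z x / cinner z z)" using gz x0 by (simp add: c_def field_simps)
      also have "\<dots> = cinner \<eta> x" by (simp add: \<eta>_def cinner_scaleC_left)
      finally show "g x = cinner \<eta> x" .
    qed
  qed
qed

section \<open>Self-adjoint operators\<close>

locale sa = fixes domA :: "'h::chilbert_space set" and A :: "'h \<Rightarrow> 'h"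
  assumes sa: "self_adjoint domA A"
begin

lemma parts: "csubspace domA \<and> closure domA = UNIV \<and>
     (\<forall>x\<in>domA. \<forall>y\<in>domA. A (x + y) = A x + A y) \<and>
     (\<forall>c. \<forall>x\<in>domA. A (scaleC c x) = scaleC c (A x)) \<and>
     (\<forall>\<phi>\<in>domA. \<forall>\<psi>\<in>domA. cinner (A \<phi>) \<psi> = cinner \<phi> (A \<psi>)) \<and>
     (\<forall>\<psi> \<eta>. (\<forall>\<phi>\<in>domA. cinner (A \<phi>) \<psi> = cinner \<phi> \<eta>) \<longrightarrow> \<psi> \<in> domA \<and> A \<psi> = \<eta>)"
  using sa unfolding self_adjoint_def .

lemma sub: "csubspace domA" using parts by (elim conjE)
lemma dense: "closure domA = UNIV" using parts by (elim conjE)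
lemma p3: "\<forall>x\<in>domA. \<forall>y\<in>domA. A (x + y) = A x + A y" using parts by (elim conjE)
lemma p4: "\<forall>c. \<forall>x\<in>domA. A (scaleC c x) = scaleC c (A x)" using parts by (elim conjE)
lemma p5: "\<forall>\<phi>\<in>domA. \<forall>\<psi>\<in>domA. cinner (A \<phi>) \<psi> = cinner \<phi> (A \<psi>)" using parts by (elim conjE)
lemma Aadd: "x \<in> domA \<Longrightarrow> y \<in> domA \<Longrightarrow> A (x + y) = A x + A y"
  using p3 by blast
lemma AscaleC: "x \<in> domA \<Longrightarrow> A (scaleC c x) = scaleC c (A x)"
  using p4 by blast
lemma Asym: "x \<in> domA \<Longrightarrow> y \<in> domA \<Longrightarrow> cinner (A x) y = cinner x (A y)"
  using p5 by blast
lemma Aadj: "(\<And>\<phi>. \<phi> \<in> domA \<Longrightarrow> cinner (A \<phi>) \<psi> = cinner \<phi> \<eta>) \<Longrightarrow> \<psi> \<in> domA \<and> A \<psi> = \<eta>"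
proof -
  assume h: "\<And>\<phi>. \<phi> \<in> domA \<Longrightarrow> cinner (A \<phi>) \<psi> = cinner \<phi> \<eta>"
  have H: "\<forall>\<psi> \<eta>. (\<forall>\<phi>\<in>domA. cinner (A \<phi>) \<psi> = cinner \<phi> \<eta>) \<longrightarrow> \<psi> \<in> domA \<and> A \<psi> = \<eta>"
    using parts by (elim conjE)
  have "\<forall>\<phi>\<in>domA. cinner (A \<phi>) \<psi> = cinner \<phi> \<eta>" using h by blast
  moreover have "(\<forall>\<phi>\<in>domA. cinner (A \<phi>) \<psi> = cinner \<phi> \<eta>) \<longrightarrow> \<psi> \<in> domA \<and> A \<psi> = \<eta>"
    using spec[OF spec[OF H, of \<psi>], of \<eta>] .
  ultimately show ?thesis by (rule mp[rotated])
qed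
lemma A0: "A 0 = 0"
  using Aadd[of 0 0] csub_zero[OF sub] by simp
lemma AscaleR: "x \<in> domA \<Longrightarrow> A (scaleR r x) = scaleR r (A x)"
  by (simp add: scaleR_scaleC AscaleC)
lemma Aminus: "x \<in> domA \<Longrightarrow> A (- x) = - A x"
  using AscaleC[of x "-1"] by (simp add: scaleC_minus1)
lemma Adiff: "x \<in> domA \<Longrightarrow> y \<in> domA \<Longrightarrow> A (x - y) = A x - A y"
  using Aadd[of x "- y"] Aminus[of y] csub_minus[OF sub, of y] by simp

lemma dom_add: "x \<in> domA \<Longrightarrow> y \<in> domA \<Longrightarrow> x + y \<in> domA" using csub_add[OF sub] .
lemma dom_scaleC: "x \<in> domA \<Longrightarrow> scaleC c x \<in> domA" using csub_scaleC[OF sub] .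
lemma dom_scaleR: "x \<in> domA \<Longrightarrow> scaleR r x \<in> domA" using csub_scaleR[OF sub] .
lemma dom_0: "0 \<in> domA" using csub_zero[OF sub] .

end

lemma dense_hom:
  fixes g :: "'a::complex_inner_space \<Rightarrow> 'b::complex_inner_space"
  assumes "continuous_on UNIV g" "closure S = UNIV" "\<And>x. x \<in> S \<Longrightarrow> g (scaleC c x) = scaleC c (g x)"
  shows "g (scaleC c x) = scaleC c (g x)"
proof (rule dense_eq[of "\<lambda>x. g (scaleC c x)" "\<lambda>x. scaleC c (g x)" S])
  show "continuous_on UNIV (\<lambda>x. g (scaleC c x))"
    by (rule continuous_on_compose2[OF assms(1)]) (auto intro!: continuous_intros)
  show "continuous_on UNIV (\<lambda>x. scaleC c (g x))" by (auto intro!: continuous_intros assms(1))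
qed (use assms in auto)

lemma dense_hom_fun:
  fixes g :: "'a::complex_inner_space \<Rightarrow> complex"
  assumes "continuous_on UNIV g" "closure S = UNIV" "\<And>x. x \<in> S \<Longrightarrow> g (scaleC c x) = c * g x"
  shows "g (scaleC c x) = c * g x"
proof (rule dense_eq[of "\<lambda>x. g (scaleC c x)" "\<lambda>x. c * g x" S])
  show "continuous_on UNIV (\<lambda>x. g (scaleC c x))"
    by (rule continuous_on_compose2[OF assms(1)]) (auto intro!: continuous_intros)
  show "continuous_on UNIV (\<lambda>x. c * g x)" by (auto intro!: continuous_intros assms(1))
qed (use assms in auto)

lemma bclinI:
  fixes g :: "'a::complex_inner_space \<Rightarrow> 'b::complex_inner_space"
  assumes "\<And>x y. g (x + y) = g x + g y" "\<And>c x. g (scaleC c x) = scaleC c (g x)"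
    "\<And>x. norm (g x) \<le> K * norm x"
  shows "bounded_clinear g"
  unfolding bounded_clinear_def
proof
  show "bounded_linear g"
  proof (rule bounded_linear_intro[of _ K])
    show "g (x + y) = g x + g y" for x y by (rule assms(1))
    show "g (scaleR r x) = scaleR r (g x)" for r x by (simp add: scaleR_scaleC assms(2))
    show "norm (g x) \<le> norm x * K" for x using assms(3)[of x] by (simp add: mult.commute)
  qed
qed (use assms in auto)

context sa begin

lemma dnsA: "closure domA = UNIV" using parts by (elim conjE)

definition B :: "('h \<Rightarrow> 'h) \<Rightarrow> 'h \<Rightarrow> 'h \<Rightarrow> complex" where
  "B S \<phi> \<psi> = cinner (A \<phi>) (S \<psi>) - cinner \<phi> (S (A \<psi>))"

lemma Badd1: "bounded_clinear S \<Longrightarrow> \<phi> \<in> domA \<Longrightarrow> \<phi>' \<in> domA \<Longrightarrow> B S (\<phi> + \<phi>') \<psi> = B S \<phi> \<psi> + B S \<phi>' \<psi>"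
  by (simp add: B_def Aadd cinner_add_left)

lemma Badd2: "bounded_clinear S \<Longrightarrow> \<psi> \<in> domA \<Longrightarrow> \<psi>' \<in> domA \<Longrightarrow> B S \<phi> (\<psi> + \<psi>') = B S \<phi> \<psi> + B S \<phi> \<psi>'"
  by (simp add: B_def Aadd cinner_add_right bclin_add)

lemma Bsc1: "bounded_clinear S \<Longrightarrow> \<phi> \<in> domA \<Longrightarrow> B S (scaleC c \<phi>) \<psi> = cnj c * B S \<phi> \<psi>"
  by (simp add: B_def AscaleC cinner_scaleC_left algebra_simps)

lemma Bsc2: "bounded_clinear S \<Longrightarrow> \<psi> \<in> domA \<Longrightarrow> B S \<phi> (scaleC c \<psi>) = c * B S \<phi> \<psi>"
  by (simp add: B_def AscaleC cinner_scaleC_right bclin_scaleC algebra_simps)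

lemma B0: "bounded_clinear S \<Longrightarrow> B S 0 \<psi> = 0"
  by (simp add: B_def A0)

lemma B0': "bounded_clinear S \<Longrightarrow> B S \<phi> 0 = 0"
  by (simp add: B_def A0 bclin_zero)

lemma K1:
  assumes S: "bounded_clinear S" and c1: "C1 domA A S"
  shows "\<exists>C\<ge>0. \<forall>\<phi>\<in>domA. cmod (B S \<phi> \<phi>) \<le> C * (norm \<phi>)\<^sup>2"
proof -
  have cont: "continuous_on domA (\<lambda>\<phi>. B S \<phi> \<phi>)"
    using c1 unfolding C1_def B_def by blast
  obtain d where d: "d > 0" "\<And>x'. x' \<in> domA \<Longrightarrow> dist x' 0 < d \<Longrightarrow> dist (B S x' x') (B S 0 0) < 1"
    using cont dom_0 unfolding continuous_on_iff by (metis zero_less_one)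
  have bnd: "cmod (B S \<phi> \<phi>) \<le> (4 / d\<^sup>2) * (norm \<phi>)\<^sup>2" if ph: "\<phi> \<in> domA" for \<phi>
  proof (cases "\<phi> = 0")
    case True then show ?thesis by (simp add: B0 S)
  next
    case False
    define t where "t = d / (2 * norm \<phi>)"
    have t: "t > 0" using False d by (simp add: t_def)
    define \<phi>' where "\<phi>' = scaleC (complex_of_real t) \<phi>"
    have ph': "\<phi>' \<in> domA" by (simp add: \<phi>'_def dom_scaleC ph)
    have "norm \<phi>' = t * norm \<phi>" using t by (simp add: \<phi>'_def norm_scaleC)
    also have "\<dots> = d / 2" using False by (simp add: t_def)
    finally have "dist \<phi>' 0 < d" using d by simp
    then have "dist (B S \<phi>' \<phi>') (B S 0 0) < 1" using d(2) ph' by blast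
    then have lt: "cmod (B S \<phi>' \<phi>') < 1" by (simp add: B0 S dist_norm)
    have "B S \<phi>' \<phi>' = complex_of_real (t\<^sup>2) * B S \<phi> \<phi>"
      by (simp add: \<phi>'_def Bsc1 Bsc2 S ph dom_scaleC power2_eq_square)
    then have "cmod (B S \<phi>' \<phi>') = t\<^sup>2 * cmod (B S \<phi> \<phi>)" using t by (simp add: norm_mult norm_power)
    with lt have "t\<^sup>2 * cmod (B S \<phi> \<phi>) < 1" by simp
    then have "cmod (B S \<phi> \<phi>) < 1 / t\<^sup>2" using t by (simp add: field_simps)
    also have "1 / t\<^sup>2 = (4 / d\<^sup>2) * (norm \<phi>)\<^sup>2" using d by (simp add: t_def field_simps power2_eq_square)
    finally show ?thesis by simp
  qed
  show ?thesis by (rule exI[of _ "4 / d\<^sup>2"]) (use bnd in auto)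
qed

lemma aux_le: "(a::real) \<le> C * x \<Longrightarrow> x \<le> k \<Longrightarrow> 0 \<le> C \<Longrightarrow> a \<le> k * C"
proof -
  assume h: "a \<le> C * x" "x \<le> k" "0 \<le> C"
  have "C * x \<le> C * k" using h by (intro mult_left_mono) auto
  then show ?thesis using h by (simp add: mult.commute)
qed

lemma K2:
  assumes S: "bounded_clinear S" and c1: "C1 domA A S"
  shows "\<exists>C\<ge>0. \<forall>\<phi>\<in>domA. \<forall>\<psi>\<in>domA. cmod (B S \<phi> \<psi>) \<le> C * norm \<phi> * norm \<psi>"
proof -
  obtain C where C: "C \<ge> 0" "\<And>\<phi>. \<phi> \<in> domA \<Longrightarrow> cmod (B S \<phi> \<phi>) \<le> C * (norm \<phi>)\<^sup>2"
    using K1[OF S c1] by blast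
  have unit: "cmod (B S \<phi> \<psi>) \<le> 6 * C" if ph: "\<phi> \<in> domA" "\<psi> \<in> domA" "norm \<phi> \<le> 1" "norm \<psi> \<le> 1" for \<phi> \<psi>
  proof -
    define P1 where "P1 = B S (\<phi> + \<psi>) (\<phi> + \<psi>) - B S \<phi> \<phi> - B S \<psi> \<psi>"
    define P2 where "P2 = B S (\<phi> + scaleC \<i> \<psi>) (\<phi> + scaleC \<i> \<psi>) - B S \<phi> \<phi> - B S \<psi> \<psi>"
    have iph: "scaleC \<i> \<psi> \<in> domA" using ph by (simp add: dom_scaleC)
    have e1: "P1 = B S \<phi> \<psi> + B S \<psi> \<phi>"
      using ph by (simp add: P1_def Badd1 Badd2 S dom_add)
    have x1: "B S (\<phi> + scaleC \<i> \<psi>) (\<phi> + scaleC \<i> \<psi>) =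
        B S \<phi> (\<phi> + scaleC \<i> \<psi>) + B S (scaleC \<i> \<psi>) (\<phi> + scaleC \<i> \<psi>)"
      using ph iph by (simp only: Badd1 S)
    have x2: "B S \<phi> (\<phi> + scaleC \<i> \<psi>) = B S \<phi> \<phi> + \<i> * B S \<phi> \<psi>"
      using ph iph by (simp only: Badd2 S Bsc2)
    have x3: "B S (scaleC \<i> \<psi>) (\<phi> + scaleC \<i> \<psi>) = - \<i> * B S \<psi> \<phi> + B S \<psi> \<psi>"
    proof -
      have "B S (scaleC \<i> \<psi>) (\<phi> + scaleC \<i> \<psi>) = cnj \<i> * B S \<psi> (\<phi> + scaleC \<i> \<psi>)"
        using ph by (simp only: Bsc1 S)
      also have "\<dots> = cnj \<i> * (B S \<psi> \<phi> + \<i> * B S \<psi> \<psi>)"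
        using ph iph by (simp only: Badd2 S Bsc2)
      also have "\<dots> = - \<i> * B S \<psi> \<phi> + B S \<psi> \<psi>" by (simp add: algebra_simps)
      finally show ?thesis .
    qed
    have e2: "P2 = \<i> * B S \<phi> \<psi> - \<i> * B S \<psi> \<phi>"
      unfolding P2_def x1 x2 x3 by (simp add: algebra_simps)
    have two: "2 * B S \<phi> \<psi> = P1 - \<i> * P2"
      by (simp add: e1 e2 algebra_simps)
    have n1: "norm (\<phi> + \<psi>) \<le> 2" using ph norm_triangle_ineq[of \<phi> \<psi>] by simp
    have n2: "norm (\<phi> + scaleC \<i> \<psi>) \<le> 2"
      using ph norm_triangle_ineq[of \<phi> "scaleC \<i> \<psi>"] by (simp add: norm_scaleC)
    have sq1: "(norm (\<phi> + \<psi>))\<^sup>2 \<le> 4"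
      using n1 power_mono[OF n1 norm_ge_zero, of 2] by simp
    have sq2: "(norm (\<phi> + scaleC \<i> \<psi>))\<^sup>2 \<le> 4"
      using n2 power_mono[OF n2 norm_ge_zero, of 2] by simp
    have sq3: "(norm \<phi>)\<^sup>2 \<le> 1" using ph power_mono[OF ph(3) norm_ge_zero, of 2] by simp
    have sq4: "(norm \<psi>)\<^sup>2 \<le> 1" using ph power_mono[OF ph(4) norm_ge_zero, of 2] by simp
    have b1: "cmod (B S (\<phi> + \<psi>) (\<phi> + \<psi>)) \<le> 4 * C"
      by (rule aux_le[OF C(2) sq1 C(1)]) (use ph dom_add in blast)
    have b2: "cmod (B S (\<phi> + scaleC \<i> \<psi>) (\<phi> + scaleC \<i> \<psi>)) \<le> 4 * C"
      by (rule aux_le[OF C(2) sq2 C(1)]) (use ph iph dom_add in blast)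
    have b3: "cmod (B S \<phi> \<phi>) \<le> C"
      using aux_le[OF C(2) sq3 C(1)] ph by simp
    have b4: "cmod (B S \<psi> \<psi>) \<le> C"
      using aux_le[OF C(2) sq4 C(1)] ph by simp
    have "cmod P1 \<le> 6 * C"
      unfolding P1_def using b1 b3 b4 norm_triangle_ineq4 norm_diff_triangle_ineq
      by (smt (verit) norm_triangle_ineq4)
    moreover have "cmod P2 \<le> 6 * C"
      unfolding P2_def using b2 b3 b4
      by (smt (verit) norm_triangle_ineq4)
    ultimately have "cmod (P1 - \<i> * P2) \<le> 12 * C"
      using norm_triangle_ineq4[of P1 "\<i> * P2"] by (simp add: norm_mult)
    then have "cmod (2 * B S \<phi> \<psi>) \<le> 12 * C" by (simp add: two)
    then show ?thesis by (simp add: norm_mult)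
  qed
  have gen: "cmod (B S \<phi> \<psi>) \<le> 6 * C * norm \<phi> * norm \<psi>" if ph: "\<phi> \<in> domA" "\<psi> \<in> domA" for \<phi> \<psi>
  proof (cases "\<phi> = 0 \<or> \<psi> = 0")
    case True then show ?thesis by (auto simp: B0 B0' S)
  next
    case False
    then have nz: "norm \<phi> > 0" "norm \<psi> > 0" by auto
    define u where "u = scaleC (complex_of_real (1 / norm \<phi>)) \<phi>"
    define v where "v = scaleC (complex_of_real (1 / norm \<psi>)) \<psi>"
    have uv: "u \<in> domA" "v \<in> domA" using ph by (simp_all add: u_def v_def dom_scaleC)
    have nu: "norm u = 1" "norm v = 1" using nz by (simp_all add: u_def v_def norm_scaleC norm_divide)
    have pu: "\<phi> = scaleC (complex_of_real (norm \<phi>)) u" using nz by (simp add: u_def scaleC_scaleC scaleC_one)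
    have pv: "\<psi> = scaleC (complex_of_real (norm \<psi>)) v" using nz by (simp add: v_def scaleC_scaleC scaleC_one)
    have "B S \<phi> \<psi> = complex_of_real (norm \<phi> * norm \<psi>) * B S u v"
      by (subst pu, subst pv) (simp add: Bsc1 Bsc2 S uv dom_scaleC)
    then have "cmod (B S \<phi> \<psi>) = norm \<phi> * norm \<psi> * cmod (B S u v)"
      by (simp add: norm_mult abs_mult)
    also have "\<dots> \<le> norm \<phi> * norm \<psi> * (6 * C)"
      using unit[OF uv] nu by (intro mult_left_mono) auto
    finally show ?thesis by (simp add: algebra_simps)
  qed
  show ?thesis using gen C(1) by (intro exI[of _ "6 * C"]) auto
qed

end

context sa begin

lemma K3:
  assumes S: "bounded_clinear S" and c1: "C1 domA A S"
  obtains C where "C \<ge> 0" "\<And>\<psi>. \<psi> \<in> domA \<Longrightarrow> S \<psi> \<in> domA"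
    "\<And>\<psi>. \<psi> \<in> domA \<Longrightarrow> norm (A (S \<psi>) - S (A \<psi>)) \<le> C * norm \<psi>"
proof -
  obtain C where C: "C \<ge> 0" "\<And>\<phi> \<psi>. \<phi> \<in> domA \<Longrightarrow> \<psi> \<in> domA \<Longrightarrow> cmod (B S \<phi> \<psi>) \<le> C * norm \<phi> * norm \<psi>"
    using K2[OF S c1] by blast
  have main: "S \<psi> \<in> domA \<and> norm (A (S \<psi>) - S (A \<psi>)) \<le> C * norm \<psi>" if ps: "\<psi> \<in> domA" for \<psi>
  proof -
    define f where "f = (\<lambda>\<phi>. cnj (B S \<phi> \<psi>))"
    have fadd: "f (x + y) = f x + f y" if "x \<in> domA" "y \<in> domA" for x y
      using that by (simp add: f_def Badd1 S)
    have fbnd: "norm (f x) \<le> (C * norm \<psi>) * norm x" if "x \<in> domA" for x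
      using C(2)[OF that ps] by (simp add: f_def algebra_simps)
    obtain g where g: "continuous_on UNIV g" "\<And>x y. g (x + y) = g x + g y"
      "\<And>x. norm (g x) \<le> (C * norm \<psi>) * norm x" "\<And>x. x \<in> domA \<Longrightarrow> g x = f x"
      using dense_ext[OF sub dnsA, of f "C * norm \<psi>"] fadd fbnd C(1) by auto
    have ghom: "g (scaleC c x) = c * g x" for c x
    proof (rule dense_hom_fun[OF g(1) dnsA])
      fix x assume x: "x \<in> domA"
      then show "g (scaleC c x) = c * g x"
        by (simp add: g(4) dom_scaleC f_def Bsc1 S)
    qed
    obtain \<eta> where eta: "\<And>x. g x = cinner \<eta> x"
      using riesz[of g "C * norm \<psi>"] g(2,3) ghom by blast
    have Beta: "B S \<phi> \<psi> = cinner \<phi> \<eta>" if "\<phi> \<in> domA" for \<phi>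
    proof -
      have "cnj (B S \<phi> \<psi>) = cinner \<eta> \<phi>" using g(4)[OF that] eta[of \<phi>] by (simp add: f_def)
      then have "B S \<phi> \<psi> = cnj (cinner \<eta> \<phi>)" by (metis complex_cnj_cnj)
      then show ?thesis by (simp add: cinner_commute[of \<phi> \<eta>])
    qed
    have "\<psi>' \<in> domA \<and> A \<psi>' = S (A \<psi>) + \<eta>" if "\<psi>' = S \<psi>" for \<psi>'
    proof (rule Aadj)
      fix \<phi> assume ph: "\<phi> \<in> domA"
      have "cinner (A \<phi>) (S \<psi>) = B S \<phi> \<psi> + cinner \<phi> (S (A \<psi>))" by (simp add: B_def)
      also have "\<dots> = cinner \<phi> (S (A \<psi>) + \<eta>)" by (simp add: Beta[OF ph] cinner_add_right)
      finally show "cinner (A \<phi>) \<psi>' = cinner \<phi> (S (A \<psi>) + \<eta>)" using that by simp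
    qed
    then have SD: "S \<psi> \<in> domA" and ASe: "A (S \<psi>) = S (A \<psi>) + \<eta>" by auto
    have "norm \<eta> \<le> C * norm \<psi>"
    proof (rule dense_bound[OF dnsA])
      fix \<phi> assume "\<phi> \<in> domA"
      then show "cmod (cinner \<phi> \<eta>) \<le> C * norm \<psi> * norm \<phi>"
        using C(2)[of \<phi> \<psi>] ps Beta by (simp add: algebra_simps)
    qed (use C(1) in simp)
    then show ?thesis using SD ASe by simp
  qed
  show ?thesis using that C(1) main by blast
qed

lemma K4:
  assumes S: "bounded_clinear S" and c1: "C1 domA A S"
  obtains T where "bounded_clinear T" "\<And>\<psi>. \<psi> \<in> domA \<Longrightarrow> S \<psi> \<in> domA"
    "\<And>\<psi>. \<psi> \<in> domA \<Longrightarrow> T \<psi> = A (S \<psi>) - S (A \<psi>)"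
proof -
  obtain C where C: "C \<ge> 0" "\<And>\<psi>. \<psi> \<in> domA \<Longrightarrow> S \<psi> \<in> domA"
    "\<And>\<psi>. \<psi> \<in> domA \<Longrightarrow> norm (A (S \<psi>) - S (A \<psi>)) \<le> C * norm \<psi>"
    using K3[OF S c1] by blast
  define f where "f = (\<lambda>\<psi>. A (S \<psi>) - S (A \<psi>))"
  have fadd: "f (x + y) = f x + f y" if "x \<in> domA" "y \<in> domA" for x y
    using that by (simp add: f_def bclin_add[OF S] Aadd C(2))
  obtain g where g: "continuous_on UNIV g" "\<And>x y. g (x + y) = g x + g y"
      "\<And>x. norm (g x) \<le> C * norm x" "\<And>x. x \<in> domA \<Longrightarrow> g x = f x"
    using dense_ext[OF sub dnsA, of f C] fadd C by (auto simp: f_def)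
  have ghom: "g (scaleC c x) = scaleC c (g x)" for c x
  proof (rule dense_hom[OF g(1) dnsA])
    fix x assume x: "x \<in> domA"
    then show "g (scaleC c x) = scaleC c (g x)"
      by (simp add: g(4) dom_scaleC f_def bclin_scaleC[OF S] AscaleC C(2) scaleC_diff_right)
  qed
  have "bounded_clinear g" by (rule bclinI[OF g(2) ghom g(3)])
  then show ?thesis using that C(2) g(4) by (simp add: f_def)
qed

lemma commutator_char:
  assumes S: "bounded_clinear S" and c1: "C1 domA A S"
  shows "\<And>\<psi>. \<psi> \<in> domA \<Longrightarrow> S \<psi> \<in> domA"
    and "bounded_clinear (commutator domA A S)"
    and "\<And>\<psi>. \<psi> \<in> domA \<Longrightarrow> commutator domA A S \<psi> = A (S \<psi>) - S (A \<psi>)"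
proof -
  obtain T where T: "bounded_clinear T" "\<And>\<psi>. \<psi> \<in> domA \<Longrightarrow> S \<psi> \<in> domA"
    "\<And>\<psi>. \<psi> \<in> domA \<Longrightarrow> T \<psi> = A (S \<psi>) - S (A \<psi>)"
    using K4[OF S c1] by blast
  have Tdiag: "\<forall>\<phi>\<in>domA. cinner \<phi> (T \<phi>) = cinner (A \<phi>) (S \<phi>) - cinner \<phi> (S (A \<phi>))"
    using T by (simp add: cinner_diff_right Asym)
  have uniq: "T' = T" if T': "bounded_clinear T'"
    "\<forall>\<phi>\<in>domA. cinner \<phi> (T' \<phi>) = cinner (A \<phi>) (S \<phi>) - cinner \<phi> (S (A \<phi>))" for T'
  proof -
    define R where "R = (\<lambda>x. T' x - T x)"
    have Radd: "R (x + y) = R x + R y" for x y by (simp add: R_def bclin_add T' T)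
    have Rsc: "R (scaleC c x) = scaleC c (R x)" for c x
      by (simp add: R_def bclin_scaleC T' T scaleC_diff_right)
    have Rcont: "continuous_on UNIV R" unfolding R_def
      by (intro continuous_intros bclin_cont T' T(1))
    have diag: "cinner \<phi> (R \<phi>) = 0" if "\<phi> \<in> domA" for \<phi>
      using that Tdiag T'(2) by (simp add: R_def cinner_diff_right)
    have off: "cinner \<phi> (R \<psi>) = 0" if ph: "\<phi> \<in> domA" "\<psi> \<in> domA" for \<phi> \<psi>
    proof -
      define a where "a = cinner \<phi> (R \<psi>)"
      define b where "b = cinner \<psi> (R \<phi>)"
      have "cinner (\<phi> + \<psi>) (R (\<phi> + \<psi>)) = 0" using ph by (simp add: diag dom_add)
      then have 1: "a + b = 0"
        using diag[OF ph(1)] diag[OF ph(2)] by (simp add: Radd cinner_add_left cinner_add_right a_def b_def add.commute)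
      have "cinner (\<phi> + scaleC \<i> \<psi>) (R (\<phi> + scaleC \<i> \<psi>)) = 0" using ph by (simp add: diag dom_add dom_scaleC)
      then have "cinner \<phi> (R \<phi>) + \<i> * a - \<i> * b + cinner \<psi> (R \<psi>) = 0"
        by (simp add: Radd Rsc cinner_add_left cinner_add_right cinner_scaleC_left cinner_scaleC_right a_def b_def
            algebra_simps)
      then have 2: "\<i> * a - \<i> * b = 0" using diag[OF ph(1)] diag[OF ph(2)] by simp
      from 1 have "b = - a" by (simp add: eq_neg_iff_add_eq_0 add.commute)
      with 2 have "2 * \<i> * a = 0" by (simp add: algebra_simps)
      then have "a = 0" by simp
      then show ?thesis by (simp add: a_def)
    qed
    have Rdom: "R \<psi> = 0" if "\<psi> \<in> domA" for \<psi>
      by (rule dense_orth[OF dnsA]) (use off that in blast)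
    have "R x = 0" for x
      by (rule dense_eq[OF Rcont continuous_on_const dnsA]) (use Rdom in simp)
    then show ?thesis by (auto simp: R_def)
  qed
  have comm: "commutator domA A S = T"
    unfolding commutator_def
  proof (rule the_equality)
    show "bounded_clinear T \<and> (\<forall>\<phi>\<in>domA. cinner \<phi> (T \<phi>) = cinner (A \<phi>) (S \<phi>) - cinner \<phi> (S (A \<phi>)))"
      using T(1) Tdiag by blast
    show "T' = T" if "bounded_clinear T' \<and> (\<forall>\<phi>\<in>domA. cinner \<phi> (T' \<phi>) = cinner (A \<phi>) (S \<phi>) - cinner \<phi> (S (A \<phi>)))" for T'
      using uniq that by blast
  qed
  show "\<And>\<psi>. \<psi> \<in> domA \<Longrightarrow> S \<psi> \<in> domA" by (rule T(2))
  show "bounded_clinear (commutator domA A S)" by (simp add: comm T(1))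
  show "\<And>\<psi>. \<psi> \<in> domA \<Longrightarrow> commutator domA A S \<psi> = A (S \<psi>) - S (A \<psi>)" by (simp add: comm T(3))
qed

end

context sa begin

lemma C1_id: "C1 domA A id"
  unfolding C1_def
proof
  show "bounded_clinear (id :: 'h \<Rightarrow> 'h)" by (rule bclinI[of _ 1]) auto
  have "continuous_on domA (\<lambda>\<phi>. 0 :: complex)" by (rule continuous_on_const)
  then show "continuous_on domA (\<lambda>\<phi>. cinner (A \<phi>) (id \<phi>) - cinner \<phi> (id (A \<phi>)))"
    by (rule continuous_on_cong[THEN iffD1, rotated 2]) (auto simp: Asym)
qed

lemma C1_adj:
  assumes U: "unitary_rep U" and c1: "C1 domA A (U g)"
  shows "C1 domA A (U (- g))"
  unfolding C1_def
proof
  show "bounded_clinear (U (- g))" by (rule rep_bclin[OF U])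
  have "continuous_on domA (\<lambda>\<phi>. cinner (A \<phi>) (U g \<phi>) - cinner \<phi> (U g (A \<phi>)))"
    using c1 by (simp add: C1_def)
  then have "continuous_on domA (\<lambda>\<phi>. - cnj (cinner (A \<phi>) (U g \<phi>) - cinner \<phi> (U g (A \<phi>))))"
    by (intro continuous_on_minus continuous_on_cnj)
  moreover have "- cnj (cinner (A \<phi>) (U g \<phi>) - cinner \<phi> (U g (A \<phi>))) =
      cinner (A \<phi>) (U (- g) \<phi>) - cinner \<phi> (U (- g) (A \<phi>))" for \<phi>
  proof -
    have "cinner (A \<phi>) (U (- g) \<phi>) = cinner (U g (A \<phi>)) \<phi>" using rep_adj2[OF U, of _ "- g"] by simp
    moreover have "cinner \<phi> (U (- g) (A \<phi>)) = cinner (U g \<phi>) (A \<phi>)" using rep_adj2[OF U, of _ "- g"] by simp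
    ultimately show ?thesis
      by (simp add: cinner_commute[of "U g (A \<phi>)" \<phi>] cinner_commute[of "U g \<phi>" "A \<phi>"])
  qed
  ultimately show "continuous_on domA (\<lambda>\<phi>. cinner (A \<phi>) (U (- g) \<phi>) - cinner \<phi> (U (- g) (A \<phi>)))"
    by simp
qed

lemma C1_comp:
  assumes S: "bounded_clinear S" and V: "bounded_clinear V" and cS: "C1 domA A S" and cV: "C1 domA A V"
  shows "C1 domA A (S \<circ> V)"
  unfolding C1_def
proof
  show "bounded_clinear (S \<circ> V)"
    unfolding bounded_clinear_def
    using bounded_linear_compose[OF bclin_bl[OF S] bclin_bl[OF V]] bclin_scaleC[OF S] bclin_scaleC[OF V]
    by (simp add: comp_def)
  note cs = commutator_char[OF S cS] and cv = commutator_char[OF V cV]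
  have "continuous_on UNIV (\<lambda>\<phi>. cinner \<phi> (commutator domA A S (V \<phi>) + S (commutator domA A V \<phi>)))"
    by (intro continuous_intros continuous_on_compose2[OF bclin_cont[OF cs(2)]] bclin_cont V
        continuous_on_compose2[OF bclin_cont[OF S]] bclin_cont[OF cv(2)]) auto
  then have "continuous_on domA (\<lambda>\<phi>. cinner \<phi> (commutator domA A S (V \<phi>) + S (commutator domA A V \<phi>)))"
    by (rule continuous_on_subset) simp
  moreover have "cinner \<phi> (commutator domA A S (V \<phi>) + S (commutator domA A V \<phi>)) =
      cinner (A \<phi>) ((S \<circ> V) \<phi>) - cinner \<phi> ((S \<circ> V) (A \<phi>))" if ph: "\<phi> \<in> domA" for \<phi>
  proof -
    have Vph: "V \<phi> \<in> domA" by (rule cv(1)[OF ph])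
    have SVph: "S (V \<phi>) \<in> domA" by (rule cs(1)[OF Vph])
    have "commutator domA A S (V \<phi>) + S (commutator domA A V \<phi>) = A (S (V \<phi>)) - S (V (A \<phi>))"
      using cs(3)[OF Vph] cv(3)[OF ph] by (simp add: bclin_diff[OF S])
    then show ?thesis using Asym[OF ph SVph] by (simp add: cinner_diff_right)
  qed
  ultimately show "continuous_on domA (\<lambda>\<phi>. cinner (A \<phi>) ((S \<circ> V) \<phi>) - cinner \<phi> ((S \<circ> V) (A \<phi>)))"
    by (rule continuous_on_eq)
qed

lemma C1_all:
  assumes U: "unitary_rep U" and Y: "compact_generating_set Y" and c1: "\<forall>y\<in>Y. C1 domA A (U y)"
  shows "C1 domA A (U x)"
proof -
  have "C1 domA A (U x)" if "x \<in> gen_pow (Y \<union> uminus ` Y) n" for n x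
    using that
  proof (induction n arbitrary: x)
    case 0
    then have "x = 0" by simp
    then have "U x = id" using U by (simp add: unitary_rep_def)
    then show ?case using C1_id by (simp only:)
  next
    case (Suc n)
    then obtain a b where ab: "x = a + b" "a \<in> Y \<union> uminus ` Y" "b \<in> gen_pow (Y \<union> uminus ` Y) n" by auto
    have ca: "C1 domA A (U a)"
    proof (cases "a \<in> Y")
      case True then show ?thesis using c1 by blast
    next
      case False
      then obtain y where "y \<in> Y" "a = - y" using ab(2) by blast
      then show ?thesis using C1_adj[OF U, of y] c1 by blast
    qed
    have "U x = U a \<circ> U b" using U ab(1) by (simp add: unitary_rep_def)
    then show ?case using C1_comp[OF rep_bclin[OF U] rep_bclin[OF U] ca Suc.IH[OF ab(3)]] by (simp only:)
  qed
  moreover obtain n where "x \<in> gen_pow (Y \<union> uminus ` Y) n" using Y by (auto simp: compact_generating_set_def)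
  ultimately show ?thesis by blast
qed

end

section \<open>Nets\<close>

lemma net_eventually:
  assumes "directed_set J le"
  shows "eventually P (net_filter J le) \<longleftrightarrow> (\<exists>j\<in>J. \<forall>k\<in>J. le j k \<longrightarrow> P k)"
proof -
  have ne: "J \<noteq> {}" using assms by (simp add: directed_set_def)
  have "eventually P (INF j\<in>J. principal {k\<in>J. le j k}) \<longleftrightarrow> (\<exists>j\<in>J. eventually P (principal {k\<in>J. le j k}))"
  proof (rule eventually_INF_base[OF ne])
    fix a b assume ab: "a \<in> J" "b \<in> J"
    then obtain k where k: "k \<in> J" "le a k" "le b k" using assms unfolding directed_set_def by blast
    have "{l\<in>J. le k l} \<subseteq> {l\<in>J. le a l} \<inter> {l\<in>J. le b l}"
      using assms ab k unfolding directed_set_def by blast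
    then show "\<exists>x\<in>J. principal {k\<in>J. le x k} \<le> inf (principal {k\<in>J. le a k}) (principal {k\<in>J. le b k})"
      using k(1) by (intro bexI[of _ k]) (auto simp: inf_principal)
  qed
  then show ?thesis by (auto simp: net_filter_def eventually_principal)
qed

lemma net_proper:
  assumes "directed_set J le"
  shows "net_filter J le \<noteq> bot"
proof
  assume "net_filter J le = bot"
  then have "eventually (\<lambda>_. False) (net_filter J le)" by simp
  then obtain j where "j \<in> J" "\<forall>k\<in>J. le j k \<longrightarrow> False" using net_eventually[OF assms, of "\<lambda>_. False"] by blast
  moreover have "\<forall>j\<in>J. le j j" using assms unfolding directed_set_def by (elim conjE)
  ultimately show False by blast
qed

lemma gen_pow_compact:
  fixes Z :: "'g::topological_group_add set"
  assumes "compact Z"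
  shows "compact (gen_pow Z n)"
proof (induction n)
  case 0 then show ?case by simp
next
  case (Suc n)
  have eq: "gen_pow Z (Suc n) = (\<lambda>p. fst p + snd p) ` (Z \<times> gen_pow Z n)"
  proof
    show "gen_pow Z (Suc n) \<subseteq> (\<lambda>p. fst p + snd p) ` (Z \<times> gen_pow Z n)"
    proof
      fix g assume "g \<in> gen_pow Z (Suc n)"
      then obtain a b where "g = a + b" "a \<in> Z" "b \<in> gen_pow Z n" by auto
      then show "g \<in> (\<lambda>p. fst p + snd p) ` (Z \<times> gen_pow Z n)"
        by (intro image_eqI[of _ _ "(a, b)"]) auto
    qed
    show "(\<lambda>p. fst p + snd p) ` (Z \<times> gen_pow Z n) \<subseteq> gen_pow Z (Suc n)"
    proof
      fix g assume "g \<in> (\<lambda>p. fst p + snd p) ` (Z \<times> gen_pow Z n)"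
      then obtain a b where "a \<in> Z" "b \<in> gen_pow Z n" "g = a + b" by auto
      then show "g \<in> gen_pow Z (Suc n)" by (simp only: gen_pow.simps) blast
    qed
  qed
  show ?case unfolding eq
    by (rule compact_continuous_image) (auto intro!: continuous_intros compact_Times assms Suc)
qed

lemma net_leaves_compact:
  fixes x :: "'j \<Rightarrow> 'g::topological_space"
  assumes d: "directed_set J le" and div: "net_diverges J le x" and K: "compact K"
  shows "eventually (\<lambda>j. x j \<notin> K) (net_filter J le)"
proof -
  have "\<forall>p. \<exists>V. open V \<and> p \<in> V \<and> eventually (\<lambda>k. x k \<notin> V) (net_filter J le)"
  proof
    fix p
    from div obtain V where V: "open V" "p \<in> V" "\<not> (\<forall>j\<in>J. \<exists>k\<in>J. le j k \<and> x k \<in> V)"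
      unfolding net_diverges_def by blast
    then obtain j where "j \<in> J" "\<forall>k\<in>J. le j k \<longrightarrow> x k \<notin> V" by blast
    then have "eventually (\<lambda>k. x k \<notin> V) (net_filter J le)" using net_eventually[OF d, of "\<lambda>k. x k \<notin> V"] by blast
    then show "\<exists>V. open V \<and> p \<in> V \<and> eventually (\<lambda>k. x k \<notin> V) (net_filter J le)" using V by blast
  qed
  from choice[OF this] obtain Vf where
    Vf0: "\<forall>p. open (Vf p) \<and> p \<in> Vf p \<and> eventually (\<lambda>k. x k \<notin> Vf p) (net_filter J le)"
    by blast
  have Vf: "\<And>p. open (Vf p)" "\<And>p. p \<in> Vf p" "\<And>p. eventually (\<lambda>k. x k \<notin> Vf p) (net_filter J le)"
    using Vf0 by auto
  obtain C' where C': "C' \<subseteq> K" "finite C'" "K \<subseteq> (\<Union>c\<in>C'. Vf c)"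
  proof (rule compactE_image[OF K, of K Vf])
    show "open (Vf T)" for T by (rule Vf(1))
    show "K \<subseteq> (\<Union>c\<in>K. Vf c)" using Vf(2) by blast
  qed
  have "eventually (\<lambda>k. \<forall>c\<in>C'. x k \<notin> Vf c) (net_filter J le)"
    using C'(2) Vf(3) by (simp add: eventually_ball_finite)
  then show ?thesis by eventually_elim (use C'(3) in blast)
qed

lemma word_length_diverges:
  fixes Y :: "'g::topological_group_add set"
  assumes Y: "compact_generating_set Y" and d: "directed_set J le" and div: "net_diverges J le x"
  shows "eventually (\<lambda>j. n < word_length Y (x j)) (net_filter J le)"
proof -
  define Z where "Z = Y \<union> uminus ` Y"
  have cY: "compact Y" using Y by (simp add: compact_generating_set_def)
  have cZ: "compact Z" unfolding Z_def
    by (intro compact_Un cY compact_continuous_image continuous_intros)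
  define K where "K = (\<Union>m\<in>{..n}. gen_pow Z m)"
  have cK: "compact K" unfolding K_def by (intro compact_UN finite_atMost gen_pow_compact cZ)
  have inK: "word_length Y g \<le> n \<Longrightarrow> g \<in> K" for g
  proof -
    assume le: "word_length Y g \<le> n"
    obtain m where "g \<in> gen_pow Z m" using Y by (auto simp: compact_generating_set_def Z_def)
    then have "g \<in> gen_pow Z (word_length Y g)"
      unfolding word_length_def Z_def[symmetric] by (rule LeastI)
    then show "g \<in> K" using le by (auto simp: K_def)
  qed
  show ?thesis
  proof (rule eventually_mono[OF net_leaves_compact[OF d div cK]])
    fix j assume "x j \<notin> K"
    then show "n < word_length Y (x j)" using inK[of "x j"] by linarith
  qed
qed

lemma cinner_sum_right: "cinner x (sum f E) = (\<Sum>e\<in>E. cinner x (f e))"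
  by (induction E rule: infinite_finite_induct) (simp_all add: cinner_add_right)

lemma cinner_sum_left: "cinner (sum f E) x = (\<Sum>e\<in>E. cinner (f e) x)"
  by (induction E rule: infinite_finite_induct) (simp_all add: cinner_add_left)

lemma scaleC_sum_right: "scaleC c (sum f E) = (\<Sum>e\<in>E. scaleC c (f e))"
  by (induction E rule: infinite_finite_induct) (simp_all add: scaleC_add_right)

lemma csub_sum: "csubspace V \<Longrightarrow> (\<And>e. e \<in> E \<Longrightarrow> f e \<in> V) \<Longrightarrow> sum f E \<in> V"
  by (induction E rule: infinite_finite_induct) (simp_all add: csub_zero csub_add)

definition orthonormal :: "'a::complex_inner_space set \<Rightarrow> bool" where
  "orthonormal E \<longleftrightarrow> (\<forall>e\<in>E. cinner e e = 1) \<and> (\<forall>e\<in>E. \<forall>e'\<in>E. e \<noteq> e' \<longrightarrow> cinner e e' = 0)"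

definition expand :: "'a::complex_inner_space set \<Rightarrow> 'a \<Rightarrow> 'a" where
  "expand E w = (\<Sum>e\<in>E. scaleC (cinner e w) e)"

lemma expand_add: "expand E (x + y) = expand E x + expand E y"
  by (simp add: expand_def cinner_add_right scaleC_add_left sum.distrib)

lemma expand_scaleC: "expand E (scaleC c x) = scaleC c (expand E x)"
  by (simp add: expand_def cinner_scaleC_right scaleC_sum_right scaleC_scaleC)

lemma cinner_expand: "cinner y (expand E w) = (\<Sum>e\<in>E. cinner e w * cinner y e)"
  by (simp add: expand_def cinner_sum_right cinner_scaleC_right)

lemma cinner_expand_orth: "(\<And>e. e \<in> E \<Longrightarrow> cinner y e = 0) \<Longrightarrow> cinner y (expand E w) = 0"
  by (simp add: cinner_expand)

lemma cinner_expand_on: 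
  assumes "finite E" "orthonormal E" "e \<in> E"
  shows "cinner e (expand E w) = cinner e w"
proof -
  have "cinner e (expand E w) = (\<Sum>e'\<in>E. cinner e' w * cinner e e')" by (rule cinner_expand)
  also have "\<dots> = cinner e w * cinner e e + (\<Sum>e'\<in>E - {e}. cinner e' w * cinner e e')"
    using assms by (simp add: sum.remove)
  also have "(\<Sum>e'\<in>E - {e}. cinner e' w * cinner e e') = 0"
    using assms by (intro sum.neutral) (auto simp: orthonormal_def)
  finally show ?thesis using assms by (simp add: orthonormal_def)
qed

lemma cspan_empty: "w \<in> cspan {} \<Longrightarrow> w = 0"
  by (auto simp: cspan_def)

lemma cspan_insert:
  assumes "w \<in> cspan (insert b B)"
  obtains c w' where "w' \<in> cspan B" "w = scaleC c b + w'"
proof -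
  from assms obtain F cf where F: "finite F" "F \<subseteq> insert b B" "w = (\<Sum>f\<in>F. scaleC (cf f) f)"
    by (auto simp: cspan_def)
  show ?thesis
  proof (cases "b \<in> F")
    case True
    have "w = scaleC (cf b) b + (\<Sum>f\<in>F - {b}. scaleC (cf f) f)"
      using F True by (simp add: sum.remove)
    moreover have "(\<Sum>f\<in>F - {b}. scaleC (cf f) f) \<in> cspan B"
      unfolding cspan_def using F by (intro CollectI exI[of _ "F - {b}"] exI[of _ cf]) auto
    ultimately show ?thesis using that by blast
  next
    case False
    then have "w \<in> cspan B"
      unfolding cspan_def using F by (intro CollectI exI[of _ F] exI[of _ cf]) auto
    then show ?thesis using that[of w 0] by simp
  qed
qed

lemma gram_schmidt:
  assumes "finite B" "csubspace V" "B \<subseteq> V"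
  shows "\<exists>E. finite E \<and> E \<subseteq> V \<and> orthonormal E \<and> (\<forall>w\<in>cspan B. w = expand E w)"
  using assms
proof (induction B rule: finite_induct)
  case empty
  show ?case
    by (intro exI[of _ "{}"]) (auto simp: orthonormal_def expand_def dest: cspan_empty)
next
  case (insert b B)
  then obtain E where E: "finite E" "E \<subseteq> V" "orthonormal E" "\<forall>w\<in>cspan B. w = expand E w" by auto
  have bV: "b \<in> V" using insert by auto
  define p where "p = expand E b"
  define r where "r = b - p"
  have pV: "p \<in> V" unfolding p_def expand_def
    using E(2) by (intro csub_sum insert.prems(1) csub_scaleC) auto
  have rV: "r \<in> V" unfolding r_def by (intro csub_diff insert.prems(1) bV pV)
  have er: "cinner e r = 0" if "e \<in> E" for e
    using cinner_expand_on[OF E(1,3) that, of b] by (simp add: r_def p_def cinner_diff_right)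
  show ?case
  proof (cases "r = 0")
    case True
    then have bp: "expand E b = b" by (simp add: r_def p_def)
    show ?thesis
    proof (intro exI[of _ E] conjI E(1,2,3) ballI)
      fix w assume "w \<in> cspan (insert b B)"
      then obtain c w' where cw: "w' \<in> cspan B" "w = scaleC c b + w'" by (rule cspan_insert)
      show "w = expand E w" using cw E(4) bp by (simp add: expand_add expand_scaleC)
    qed
  next
    case False
    define u where "u = scaleC (complex_of_real (1 / norm r)) r"
    have nr: "norm r > 0" using False by simp
    have uV: "u \<in> V" unfolding u_def by (intro csub_scaleC insert.prems(1) rV)
    have uu: "cinner u u = 1"
    proof -
      have "cinner u u = complex_of_real ((norm u)\<^sup>2)" by (rule cinner_self_norm)
      also have "norm u = 1" using nr by (simp add: u_def norm_scaleC norm_divide)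
      finally show ?thesis by simp
    qed
    have eu: "cinner e u = 0" if "e \<in> E" for e
      using er[OF that] by (simp add: u_def cinner_scaleC_right)
    have ue: "cinner u e = 0" if "e \<in> E" for e
      using eu[OF that] cinner_commute[of e u] by simp
    have unE: "u \<notin> E" using eu uu by force
    have ON: "orthonormal (insert u E)"
      using E(3) uu eu ue unfolding orthonormal_def by auto
    have expE': "expand (insert u E) w = scaleC (cinner u w) u + expand E w" for w
      using E(1) unE by (simp add: expand_def)
    have uexp: "cinner u (expand E w) = 0" for w by (rule cinner_expand_orth[OF ue])
    have ur: "scaleC (cinner u r) u = r"
    proof -
      have "cinner u r = complex_of_real (1 / norm r) * cinner r r" by (simp add: u_def cinner_scaleC_left)
      also have "\<dots> = complex_of_real (norm r)"
        using nr by (simp add: cinner_self_norm power2_eq_square)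
      finally show ?thesis using nr by (simp add: u_def scaleC_scaleC scaleC_one)
    qed
    have expb: "expand (insert u E) b = b"
    proof -
      have "cinner u b = cinner u r" using uexp[of b] by (simp add: r_def p_def cinner_diff_right)
      then have "expand (insert u E) b = r + p" using ur by (simp add: expE' p_def)
      then show ?thesis by (simp add: r_def)
    qed
    show ?thesis
    proof (intro exI[of _ "insert u E"] conjI ballI)
      show "finite (insert u E)" using E(1) by simp
      show "insert u E \<subseteq> V" using E(2) uV by simp
      show "orthonormal (insert u E)" by (rule ON)
      fix w assume "w \<in> cspan (insert b B)"
      then obtain c w' where cw: "w' \<in> cspan B" "w = scaleC c b + w'" by (rule cspan_insert)
      have w': "expand (insert u E) w' = w'"
      proof -
        have "cinner u w' = 0" using uexp[of w'] E(4) cw(1) by simp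
        then show ?thesis using E(4) cw(1) by (simp add: expE')
      qed
      show "w = expand (insert u E) w" using cw w' expb by (simp add: expand_add expand_scaleC)
    qed
  qed
qed

lemma approx0:
  fixes f :: "'j \<Rightarrow> 'a::metric_space \<Rightarrow> complex"
  assumes L: "\<And>j a b. cmod (f j a - f j b) \<le> C * dist a b" and C: "0 \<le> C"
    and S: "\<And>a. a \<in> S \<Longrightarrow> ((\<lambda>j. f j a) \<longlongrightarrow> 0) F" and z: "z \<in> closure S"
  shows "((\<lambda>j. f j z) \<longlongrightarrow> 0) F"
proof (rule tendstoI)
  fix e :: real assume e: "0 < e"
  have e2: "0 < e / (2 * (C + 1))" using e C by simp
  obtain a where a: "a \<in> S" "dist a z < e / (2 * (C + 1))"
    using z e2 unfolding closure_approachable by blast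
  have Ca: "C * dist z a \<le> e / 2"
  proof -
    have "C * dist z a \<le> C * (e / (2 * (C + 1)))"
      using a(2) C by (intro mult_left_mono) (auto simp: dist_commute)
    also have "\<dots> \<le> e / 2" using C e by (simp add: field_simps)
    finally show ?thesis .
  qed
  have "eventually (\<lambda>j. dist (f j a) 0 < e / 2) F" by (rule tendstoD[OF S[OF a(1)]]) (use e in simp)
  then show "eventually (\<lambda>j. dist (f j z) 0 < e) F"
  proof eventually_elim
    case (elim j)
    have "cmod (f j z) \<le> cmod (f j a) + cmod (f j z - f j a)" by (rule norm_triangle_sub)
    also have "cmod (f j z - f j a) \<le> C * dist z a" by (rule L)
    finally show ?case using elim Ca by simp
  qed
qed

theorem corollary2p5:
  fixes Y :: "'g::{topological_group_add, t2_space} set"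
    and U :: "'g \<Rightarrow> 'h::chilbert_space \<Rightarrow> 'h"
    and J :: "'j set" and le :: "'j \<Rightarrow> 'j \<Rightarrow> bool" and x :: "'j \<Rightarrow> 'g"
    and domA :: "'h set" and A :: "'h \<Rightarrow> 'h" and D :: "'h \<Rightarrow> 'h"
  assumes "locally compact (UNIV :: 'g set)"
    and "compact_generating_set Y"
    and "unitary_rep U"
    and "directed_set J le"
    and "net_diverges J le x"
    and "self_adjoint domA A"
    and "\<forall>y\<in>Y. C1 domA A (U y)"
    and "\<forall>\<psi>. ((\<lambda>j. scaleC (1 / of_nat (word_length Y (x j)))
                 (commutator domA A (U (x j)) (U (- x j) \<psi>))) \<longlongrightarrow> D \<psi>) (net_filter J le)"
  shows "(\<forall>\<phi>\<in>orth_compl {\<psi>. D \<psi> = 0}. \<forall>\<psi>.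
            ((\<lambda>j. cinner \<phi> (U (x j) \<psi>)) \<longlongrightarrow> 0) (net_filter J le))
       \<and> \<not> (\<exists>V. finite_dim_csubspace V \<and> V \<noteq> {0} \<and> V \<subseteq> orth_compl {\<psi>. D \<psi> = 0}
                \<and> (\<forall>g. U g ` V \<subseteq> V))"
proof -
  note Yg = assms(2) and Ur = assms(3) and dir = assms(4) and div = assms(5)
  interpret sa domA A by (rule sa.intro) (rule assms(6))
  define F where "F = net_filter J le"
  have Fnb: "F \<noteq> bot" unfolding F_def by (rule net_proper[OF dir])
  define l where "l = (\<lambda>j. word_length Y (x j))"
  define T where "T = (\<lambda>j. commutator domA A (U (x j)))"
  define Dj where "Dj = (\<lambda>j \<psi>. scaleC (1 / of_nat (l j)) (T j (U (- x j) \<psi>)))"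
  have lim: "((\<lambda>j. Dj j \<psi>) \<longlongrightarrow> D \<psi>) F" for \<psi>
    using assms(8) by (simp add: Dj_def T_def l_def F_def)
  have c1: "C1 domA A (U g)" for g by (rule C1_all[OF Ur Yg assms(7)])
  note cc = commutator_char[OF rep_bclin[OF Ur] c1]
  have Udom: "U g \<psi> \<in> domA" if "\<psi> \<in> domA" for g \<psi> by (rule cc(1)[OF that])
  have Tb: "bounded_clinear (T j)" for j unfolding T_def by (rule cc(2))
  have Tf: "T j \<psi> = A (U (x j) \<psi>) - U (x j) (A \<psi>)" if "\<psi> \<in> domA" for j \<psi>
    unfolding T_def by (rule cc(3)[OF that])
  have cnjl: "cnj (1 / of_nat n :: complex) = 1 / of_nat n" for n by simp
  have Djf: "Dj j \<phi> = scaleC (1 / of_nat (l j)) (A \<phi> - U (x j) (A (U (- x j) \<phi>)))" if "\<phi> \<in> domA" for j \<phi>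
    using Tf[OF Udom[OF that]] by (simp add: Dj_def rep_inv2[OF Ur])
  have step1: "cinner (Dj j \<phi>) (U (x j) \<psi>) =
      (1 / of_nat (l j)) * (cinner (A \<phi>) (U (x j) \<psi>) - cinner \<phi> (U (x j) (A \<psi>)))"
    if ph: "\<phi> \<in> domA" "\<psi> \<in> domA" for j \<phi> \<psi>
  proof -
    have w: "U (- x j) \<phi> \<in> domA" by (rule Udom[OF ph(1)])
    have "cinner (U (x j) (A (U (- x j) \<phi>))) (U (x j) \<psi>) = cinner (A (U (- x j) \<phi>)) \<psi>"
      by (rule rep_cinner[OF Ur])
    also have "\<dots> = cinner (U (- x j) \<phi>) (A \<psi>)" by (rule Asym[OF w ph(2)])
    also have "\<dots> = cinner \<phi> (U (x j) (A \<psi>))" by (simp add: rep_adj2[OF Ur])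
    finally have e: "cinner (U (x j) (A (U (- x j) \<phi>))) (U (x j) \<psi>) = cinner \<phi> (U (x j) (A \<psi>))" .
    show ?thesis
      by (simp add: Djf[OF ph(1)] cinner_scaleC_left cinner_diff_left e del: of_nat_eq_0_iff)
  qed
  have linf: "filterlim (\<lambda>j. real (l j)) at_infinity F"
  proof (rule filterlim_at_top_imp_at_infinity, unfold filterlim_at_top, intro allI)
    fix Z :: real
    obtain n :: nat where n: "Z < real n" using reals_Archimedean2 by blast
    have "eventually (\<lambda>j. n < l j) F" unfolding F_def l_def by (rule word_length_diverges[OF Yg dir div])
    then show "eventually (\<lambda>j. Z \<le> real (l j)) F" by eventually_elim (use n in linarith)
  qed
  have step2: "((\<lambda>j. cinner (Dj j \<phi>) (U (x j) \<psi>)) \<longlongrightarrow> 0) F" if ph: "\<phi> \<in> domA" "\<psi> \<in> domA" for \<phi> \<psi>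
  proof (rule Lim_null_comparison)
    define M where "M = norm (A \<phi>) * norm \<psi> + norm \<phi> * norm (A \<psi>)"
    show "((\<lambda>j. M / real (l j)) \<longlongrightarrow> 0) F" by (rule tendsto_divide_0[OF tendsto_const linf])
    show "eventually (\<lambda>j. norm (cinner (Dj j \<phi>) (U (x j) \<psi>)) \<le> M / real (l j)) F"
    proof (rule always_eventually, intro allI)
      fix j
      have "cmod (cinner (A \<phi>) (U (x j) \<psi>) - cinner \<phi> (U (x j) (A \<psi>))) \<le>
          cmod (cinner (A \<phi>) (U (x j) \<psi>)) + cmod (cinner \<phi> (U (x j) (A \<psi>)))"
        by (rule norm_triangle_ineq4)
      also have "\<dots> \<le> norm (A \<phi>) * norm (U (x j) \<psi>) + norm \<phi> * norm (U (x j) (A \<psi>))"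
        by (intro add_mono cauchy_schwarz)
      also have "\<dots> = M" by (simp add: M_def rep_norm[OF Ur])
      finally have b: "cmod (cinner (A \<phi>) (U (x j) \<psi>) - cinner \<phi> (U (x j) (A \<psi>))) \<le> M" .
      have "norm (cinner (Dj j \<phi>) (U (x j) \<psi>)) =
          (1 / real (l j)) * cmod (cinner (A \<phi>) (U (x j) \<psi>) - cinner \<phi> (U (x j) (A \<psi>)))"
        by (simp add: step1[OF ph] norm_mult norm_divide)
      also have "\<dots> \<le> (1 / real (l j)) * M" using b by (intro mult_left_mono) auto
      finally show "norm (cinner (Dj j \<phi>) (U (x j) \<psi>)) \<le> M / real (l j)" by simp
    qed
  qed
  have step3: "((\<lambda>j. cinner (D \<phi>) (U (x j) \<psi>)) \<longlongrightarrow> 0) F" if ph: "\<phi> \<in> domA" "\<psi> \<in> domA" for \<phi> \<psi>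
  proof -
    have r: "((\<lambda>j. cinner (D \<phi> - Dj j \<phi>) (U (x j) \<psi>)) \<longlongrightarrow> 0) F"
    proof (rule Lim_null_comparison)
      show "eventually (\<lambda>j. norm (cinner (D \<phi> - Dj j \<phi>) (U (x j) \<psi>)) \<le> norm (D \<phi> - Dj j \<phi>) * norm \<psi>) F"
        by (rule always_eventually, intro allI, rule order_trans[OF cauchy_schwarz]) (simp add: rep_norm[OF Ur])
      have "((\<lambda>j. D \<phi> - Dj j \<phi>) \<longlongrightarrow> 0) F"
        using tendsto_diff[OF tendsto_const[of "D \<phi>"] lim[of \<phi>]] by simp
      then have "((\<lambda>j. norm (D \<phi> - Dj j \<phi>)) \<longlongrightarrow> 0) F" by (rule tendsto_norm_zero)
      then show "((\<lambda>j. norm (D \<phi> - Dj j \<phi>) * norm \<psi>) \<longlongrightarrow> 0) F"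
        by (rule tendsto_mult_left_zero)
    qed
    have "((\<lambda>j. cinner (Dj j \<phi>) (U (x j) \<psi>) + cinner (D \<phi> - Dj j \<phi>) (U (x j) \<psi>)) \<longlongrightarrow> 0 + 0) F"
      by (rule tendsto_add[OF step2[OF ph] r])
    then show ?thesis by (simp add: cinner_diff_left)
  qed
  have step4: "((\<lambda>j. cinner (D \<phi>) (U (x j) \<psi>)) \<longlongrightarrow> 0) F" if ph: "\<phi> \<in> domA" for \<phi> \<psi>
  proof (rule approx0[where S = domA and C = "norm (D \<phi>)"])
    show "cmod (cinner (D \<phi>) (U (x j) a) - cinner (D \<phi>) (U (x j) b)) \<le> norm (D \<phi>) * dist a b" for j a b
    proof -
      have "cmod (cinner (D \<phi>) (U (x j) a) - cinner (D \<phi>) (U (x j) b)) = cmod (cinner (D \<phi>) (U (x j) (a - b)))"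
        by (simp add: cinner_diff_right bclin_diff[OF rep_bclin[OF Ur]])
      also have "\<dots> \<le> norm (D \<phi>) * norm (U (x j) (a - b))" by (rule cauchy_schwarz)
      finally show ?thesis by (simp add: rep_norm[OF Ur] dist_norm)
    qed
    show "((\<lambda>j. cinner (D \<phi>) (U (x j) a)) \<longlongrightarrow> 0) F" if "a \<in> domA" for a by (rule step3[OF ph that])
  qed (auto simp: dnsA)
  have Djcont: "continuous_on UNIV (Dj j)" for j
  proof -
    have "continuous_on UNIV (\<lambda>\<psi>. T j (U (- x j) \<psi>))"
      by (rule continuous_on_compose2[OF bclin_cont[OF Tb, of UNIV] bclin_cont[OF rep_bclin[OF Ur]]]) simp
    then show ?thesis unfolding Dj_def by (rule continuous_on_scaleC)
  qed
  have Djsym0: "cinner (Dj j v) w = cinner v (Dj j w)" if vw: "v \<in> domA" "w \<in> domA" for j v w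
  proof -
    have a: "cinner (A v) w = cinner v (A w)" by (rule Asym[OF vw])
    have b: "cinner (U (x j) (A (U (- x j) v))) w = cinner v (U (x j) (A (U (- x j) w)))"
    proof -
      have "cinner (U (x j) (A (U (- x j) v))) w = cinner (A (U (- x j) v)) (U (- x j) w)"
        by (rule rep_adj[OF Ur])
      also have "\<dots> = cinner (U (- x j) v) (A (U (- x j) w))" by (rule Asym[OF Udom[OF vw(1)] Udom[OF vw(2)]])
      also have "\<dots> = cinner v (U (x j) (A (U (- x j) w)))" using rep_adj[OF Ur, of "- x j"] by simp
      finally show ?thesis .
    qed
    show ?thesis
      by (simp add: Djf[OF vw(1)] Djf[OF vw(2)] cinner_scaleC_left cinner_scaleC_right
          cinner_diff_left cinner_diff_right a b del: of_nat_eq_0_iff)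
  qed
  have Djsym1: "cinner (Dj j v) w = cinner v (Dj j w)" if w: "w \<in> domA" for j v w
  proof (rule dense_eq[of "\<lambda>v. cinner (Dj j v) w" "\<lambda>v. cinner v (Dj j w)" domA v])
    show "continuous_on UNIV (\<lambda>v. cinner (Dj j v) w)"
      by (rule continuous_on_cinner[OF Djcont continuous_on_const])
    show "continuous_on UNIV (\<lambda>v. cinner v (Dj j w))"
      by (rule continuous_on_cinner[OF continuous_on_id continuous_on_const])
    show "closure domA = UNIV" by (rule dnsA)
    show "cinner (Dj j v) w = cinner v (Dj j w)" if "v \<in> domA" for v by (rule Djsym0[OF that w])
  qed
  have Djsym: "cinner (Dj j v) w = cinner v (Dj j w)" for j v w
  proof (rule dense_eq[of "\<lambda>w. cinner (Dj j v) w" "\<lambda>w. cinner v (Dj j w)" domA w])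
    show "continuous_on UNIV (\<lambda>w. cinner (Dj j v) w)"
      by (rule continuous_on_cinner[OF continuous_on_const continuous_on_id])
    show "continuous_on UNIV (\<lambda>w. cinner v (Dj j w))"
      by (rule continuous_on_cinner[OF continuous_on_const Djcont])
    show "closure domA = UNIV" by (rule dnsA)
    show "cinner (Dj j v) w = cinner v (Dj j w)" if "w \<in> domA" for w by (rule Djsym1[OF that])
  qed
  have Dsym: "cinner (D v) w = cinner v (D w)" for v w
  proof (rule tendsto_unique[OF Fnb])
    show "((\<lambda>j. cinner (Dj j v) w) \<longlongrightarrow> cinner (D v) w) F" by (intro tendsto_intros lim)
    show "((\<lambda>j. cinner (Dj j v) w) \<longlongrightarrow> cinner v (D w)) F"
      unfolding Djsym by (intro tendsto_intros lim)
  qed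
  define W where "W = {w. \<forall>\<psi>. ((\<lambda>j. cinner w (U (x j) \<psi>)) \<longlongrightarrow> 0) F}"
  have DW: "D \<phi> \<in> W" if "\<phi> \<in> domA" for \<phi> using step4[OF that] by (simp add: W_def)
  have Wsub: "csubspace W"
    unfolding csubspace_def W_def
  proof (intro conjI ballI allI CollectI)
    show "((\<lambda>j. cinner 0 (U (x j) \<psi>)) \<longlongrightarrow> 0) F" for \<psi> by simp
    fix a b \<psi> assume ab: "a \<in> {w. \<forall>\<psi>. ((\<lambda>j. cinner w (U (x j) \<psi>)) \<longlongrightarrow> 0) F}"
      "b \<in> {w. \<forall>\<psi>. ((\<lambda>j. cinner w (U (x j) \<psi>)) \<longlongrightarrow> 0) F}"
    have "((\<lambda>j. cinner a (U (x j) \<psi>) + cinner b (U (x j) \<psi>)) \<longlongrightarrow> 0 + 0) F"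
      by (rule tendsto_add) (use ab in simp_all)
    then show "((\<lambda>j. cinner (a + b) (U (x j) \<psi>)) \<longlongrightarrow> 0) F"
      by (simp add: cinner_add_left)
  next
    fix c a \<psi> assume a: "a \<in> {w. \<forall>\<psi>. ((\<lambda>j. cinner w (U (x j) \<psi>)) \<longlongrightarrow> 0) F}"
    have "((\<lambda>j. cnj c * cinner a (U (x j) \<psi>)) \<longlongrightarrow> 0) F"
      by (rule tendsto_mult_right_zero) (use a in simp)
    then show "((\<lambda>j. cinner (scaleC c a) (U (x j) \<psi>)) \<longlongrightarrow> 0) F"
      by (simp add: cinner_scaleC_left)
  qed
  have Wcl: "closed W"
  proof -
    have "closure W \<subseteq> W"
    proof
      fix z assume z: "z \<in> closure W"
      show "z \<in> W" unfolding W_def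
      proof (intro CollectI allI)
        fix \<psi>
        show "((\<lambda>j. cinner z (U (x j) \<psi>)) \<longlongrightarrow> 0) F"
        proof (rule approx0[where f = "\<lambda>j w. cinner w (U (x j) \<psi>)" and S = W and C = "norm \<psi>", OF _ _ _ z])
          show "cmod (cinner a (U (x j) \<psi>) - cinner b (U (x j) \<psi>)) \<le> norm \<psi> * dist a b" for j a b
          proof -
            have "cmod (cinner a (U (x j) \<psi>) - cinner b (U (x j) \<psi>)) = cmod (cinner (a - b) (U (x j) \<psi>))"
              by (simp add: cinner_diff_left)
            also have "\<dots> \<le> norm (a - b) * norm (U (x j) \<psi>)" by (rule cauchy_schwarz)
            finally show ?thesis by (simp add: rep_norm[OF Ur] dist_norm mult.commute)
          qed
        qed (auto simp: W_def)
      qed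
    qed
    then show ?thesis using closure_subset_eq by blast
  qed
  have partA: "\<forall>\<phi>\<in>orth_compl {\<psi>. D \<psi> = 0}. \<forall>\<psi>. ((\<lambda>j. cinner \<phi> (U (x j) \<psi>)) \<longlongrightarrow> 0) F"
  proof (intro ballI)
    fix v assume v: "v \<in> orth_compl {\<psi>. D \<psi> = 0}"
    obtain m where m: "m \<in> W" "\<And>y. y \<in> W \<Longrightarrow> cinner y (v - m) = 0"
      using projection[OF Wsub Wcl, of v] by blast
    define r where "r = v - m"
    have "D r = 0"
    proof (rule dense_orth[OF dnsA])
      fix \<phi> assume "\<phi> \<in> domA"
      then have "cinner (D \<phi>) r = 0" using m(2) DW by (simp add: r_def)
      then show "cinner \<phi> (D r) = 0" by (simp add: Dsym)
    qed
    then have rv: "cinner r v = 0" using v by (simp add: orth_compl_def)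
    have rm: "cinner r m = 0" using m(2)[OF m(1)] cinner_commute[of r m] by (simp add: r_def)
    have "cinner r r = 0" using rv rm by (simp add: r_def cinner_diff_right)
    then have "r = 0" by (simp add: cinner_self_eq_0)
    then have "v = m" by (simp add: r_def)
    then show "\<forall>\<psi>. ((\<lambda>j. cinner v (U (x j) \<psi>)) \<longlongrightarrow> 0) F" using m(1) by (simp add: W_def)
  qed
  have partB: "\<not> (\<exists>V. finite_dim_csubspace V \<and> V \<noteq> {0} \<and> V \<subseteq> orth_compl {\<psi>. D \<psi> = 0}
                \<and> (\<forall>g. U g ` V \<subseteq> V))"
  proof
    assume "\<exists>V. finite_dim_csubspace V \<and> V \<noteq> {0} \<and> V \<subseteq> orth_compl {\<psi>. D \<psi> = 0} \<and> (\<forall>g. U g ` V \<subseteq> V)"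
    then obtain V where V: "finite_dim_csubspace V" "V \<noteq> {0}" "V \<subseteq> orth_compl {\<psi>. D \<psi> = 0}"
      "\<And>g. U g ` V \<subseteq> V" by blast
    obtain Bs where Bs: "finite Bs" "V = cspan Bs" "csubspace V" using V(1) by (auto simp: finite_dim_csubspace_def)
    have BsV: "Bs \<subseteq> V"
    proof
      fix b assume "b \<in> Bs"
      then have "b \<in> cspan Bs" unfolding cspan_def
        by (intro CollectI exI[of _ "{b}"] exI[of _ "\<lambda>_. 1"]) (simp add: scaleC_one)
      then show "b \<in> V" using Bs(2) by simp
    qed
    obtain E where E: "finite E" "E \<subseteq> V" "orthonormal E" "\<forall>w\<in>cspan Bs. w = expand E w"
      using gram_schmidt[OF Bs(1,3) BsV] by blast
    obtain \<phi> where ph: "\<phi> \<in> V" "\<phi> \<noteq> 0" using V(2) Bs(3) csub_zero by blast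
    have wV: "U (x j) \<phi> \<in> V" for j using V(4) ph(1) by blast
    have eq: "cinner \<phi> \<phi> = (\<Sum>e\<in>E. cinner e (U (x j) \<phi>) * cinner (U (x j) \<phi>) e)" for j
    proof -
      have "cinner \<phi> \<phi> = cinner (U (x j) \<phi>) (U (x j) \<phi>)" by (simp add: rep_cinner[OF Ur])
      also have "\<dots> = cinner (U (x j) \<phi>) (expand E (U (x j) \<phi>))" using E(4) wV Bs(2) by metis
      also have "\<dots> = (\<Sum>e\<in>E. cinner e (U (x j) \<phi>) * cinner (U (x j) \<phi>) e)" by (rule cinner_expand)
      finally show ?thesis .
    qed
    have "((\<lambda>j. \<Sum>e\<in>E. cinner e (U (x j) \<phi>) * cinner (U (x j) \<phi>) e) \<longlongrightarrow> 0) F"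
    proof -
      have "((\<lambda>j. \<Sum>e\<in>E. cinner e (U (x j) \<phi>) * cinner (U (x j) \<phi>) e) \<longlongrightarrow> (\<Sum>e\<in>E. 0 * 0)) F"
      proof (intro tendsto_sum tendsto_mult)
        fix e assume "e \<in> E"
        then have eo: "e \<in> orth_compl {\<psi>. D \<psi> = 0}" using E(2) V(3) by blast
        show t: "((\<lambda>j. cinner e (U (x j) \<phi>)) \<longlongrightarrow> 0) F" using partA eo by blast
        show "((\<lambda>j. cinner (U (x j) \<phi>) e) \<longlongrightarrow> 0) F"
          using tendsto_cnj[OF t] by (simp add: cinner_commute[of e])
      qed
      then show ?thesis by simp
    qed
    then have "((\<lambda>j. cinner \<phi> \<phi>) \<longlongrightarrow> 0) F" by (simp add: eq[symmetric])
    then have "cinner \<phi> \<phi> = 0" by (rule tendsto_unique[OF Fnb tendsto_const])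
    then show False using ph(2) by (simp add: cinner_self_eq_0)
  qed
  show ?thesis using partA partB by (simp add: F_def)
qed

end
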